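(* Let $n\ge2$, $\lambda=\frac{n-1}2$, $m\in\mathbb N$, and let $\Phi_m=C(m)\sum_{l=0}^m\frac{l+\lambda}{\lambda}C_l^\lambda$, regarded as a zonal function on $\mathcal S^n$, where $C(m)$ is a nonzero constant. Then $$\mathrm{var}_S(\Phi_m)=\left(\frac{2m+2\lambda+1}{2m}\right)^2-1,\qquad \mathrm{var}_M(\Phi_m)=\frac{m(m+2\lambda+1)(2\lambda+1)}{2\lambda+3}.$$
   Context: $\mathcal S^n\subset\mathbb R^{n+1}$ is the unit sphere with rotation-invariant surface measure $\sigma$; a zonal function $g$ is $x\mapsto g(x\cdot\hat e)$, $\hat e=(1,0,\dots,0)$. $C_l^\lambda$ is the Gegenbauer polynomial ($\sum_lC_l^\lambda(t)r^l=(1-2tr+r^2)^{-\lambda}$). $\mathrm{var}_S(f)=\left(\frac{\int|f|^2d\sigma}{|\int x|f(x)|^2d\sigma(x)|}\right)^2-1$ (Euclidean norm of the vector integral in the denominator) and $\mathrm{var}_M(f)=-\frac{\int\Delta^*f\,\overline f\,d\sigma}{\int|f|^2d\sigma}$, where $\Delta^*$ is the Laplace–Beltrami operator on $\mathcal S^n$. *)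

theory Defs
  imports "HOL-Analysis.Analysis"
begin

text \<open>Gegenbauer polynomials via the three-term recurrence
  (equivalent to the generating function (1-2tr+r^2)^(-lambda)).\<close>
fun gegenbauer :: "real \<Rightarrow> nat \<Rightarrow> real \<Rightarrow> real" where
  "gegenbauer lam 0 t = 1"
| "gegenbauer lam (Suc 0) t = 2 * lam * t"
| "gegenbauer lam (Suc (Suc l)) t =
     (2 * t * (real l + 1 + lam) * gegenbauer lam (Suc l) t
      - (real l + 2 * lam) * gegenbauer lam l t) / (real l + 2)"

text \<open>Rotation-invariant surface measure on the unit sphere of R^(n+1) = real^'n,
  realised as (n+1) times the push-forward of Lebesgue measure on the unit ball
  under radial projection x / |x| (cone measure = surface measure).\<close>
definition sphere_measure :: "(real ^ 'n) measure" where
  "sphere_measure =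
     scale_measure (ennreal (real CARD('n)))
       (distr (restrict_space lborel (ball 0 1)) borel (\<lambda>x. x /\<^sub>R norm x))"

definition laplacian :: "(real ^ 'n \<Rightarrow> real) \<Rightarrow> real ^ 'n \<Rightarrow> real" where
  "laplacian F x = (\<Sum>i\<in>Basis. deriv (deriv (\<lambda>t. F (x + t *\<^sub>R i))) 0)"

definition laplace_beltrami :: "(real ^ 'n \<Rightarrow> real) \<Rightarrow> real ^ 'n \<Rightarrow> real" where
  "laplace_beltrami f x = laplacian (\<lambda>y. f (y /\<^sub>R norm y)) x"

definition var_S :: "(real ^ 'n \<Rightarrow> real) \<Rightarrow> real" where
  "var_S f = ((\<integral>x. (f x)\<^sup>2 \<partial>sphere_measure)
              / norm (\<integral>x. (f x)\<^sup>2 *\<^sub>R x \<partial>sphere_measure))\<^sup>2 - 1"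

definition var_M :: "(real ^ 'n \<Rightarrow> real) \<Rightarrow> real" where
  "var_M f = - (\<integral>x. laplace_beltrami f x * f x \<partial>sphere_measure)
              / (\<integral>x. (f x)\<^sup>2 \<partial>sphere_measure)"

end

theory Submission
  imports Defs "HOL-Library.Countable"
begin


typedef 'a wo = "UNIV :: 'a set" by auto

instance wo :: (finite) finite
proof
  have "UNIV = Abs_wo ` UNIV" by (metis Rep_wo_inverse surj_def)
  then show "finite (UNIV :: 'a wo set)" by (metis finite finite_imageI)
qed

instantiation wo :: (finite) linorder
begin
definition less_eq_wo :: "'a wo \<Rightarrow> 'a wo \<Rightarrow> bool" where
  "less_eq_wo x y \<longleftrightarrow> to_nat (Rep_wo x) \<le> to_nat (Rep_wo y)"
definition less_wo :: "'a wo \<Rightarrow> 'a wo \<Rightarrow> bool" where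
  "less_wo x y \<longleftrightarrow> to_nat (Rep_wo x) < to_nat (Rep_wo y)"
instance
proof
  fix x y z :: "'a wo"
  show "(x < y) = (x \<le> y \<and> \<not> y \<le> x)" by (auto simp: less_eq_wo_def less_wo_def)
  show "x \<le> x" by (simp add: less_eq_wo_def)
  show "x \<le> y \<Longrightarrow> y \<le> z \<Longrightarrow> x \<le> z" by (simp add: less_eq_wo_def)
  show "x \<le> y \<Longrightarrow> y \<le> x \<Longrightarrow> x = y"
    by (simp add: less_eq_wo_def Rep_wo_inject)
  show "x \<le> y \<or> y \<le> x" by (auto simp: less_eq_wo_def)
qed
end

instance wo :: (finite) wellorder
proof
  fix P :: "'a wo \<Rightarrow> bool" and a :: "'a wo"
  assume H: "\<And>x. (\<And>y. y < x \<Longrightarrow> P y) \<Longrightarrow> P x"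
  have "\<And>n x. to_nat (Rep_wo x) = n \<Longrightarrow> P x"
  proof -
    fix n
    show "\<And>x. to_nat (Rep_wo x) = n \<Longrightarrow> P x"
    proof (induction n rule: less_induct)
      case (less n)
      show ?case
        by (rule H) (use less in \<open>auto simp: less_wo_def\<close>)
    qed
  qed
  then show "P a" by blast
qed


lemma Basis_real_vec: "(Basis :: (real^'n) set) = range (\<lambda>i. axis i 1)"
  by (auto simp: Basis_vec_def)

lemma prod_Basis_vec: "(\<Prod>b\<in>(Basis :: (real^'n) set). f b) = (\<Prod>i\<in>UNIV. f (axis i 1))"
  unfolding Basis_real_vec by (subst prod.reindex) (auto simp: inj_on_def axis_eq_axis)

lemma sum_Basis_vec: "(\<Sum>b\<in>(Basis :: (real^'n) set). f b) = (\<Sum>i\<in>UNIV. f (axis i 1))"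
  unfolding Basis_real_vec by (subst sum.reindex) (auto simp: inj_on_def axis_eq_axis)

lemma reindex_lborel:
  fixes \<phi> :: "'a::finite \<Rightarrow> 'b::finite"
  assumes bij: "bij \<phi>"
  shows "distr lborel borel (\<lambda>y::real^'b. \<chi> i. y $ \<phi> i) = (lborel :: (real^'a) measure)"
proof (rule lborel_eqI[symmetric])
  let ?R = "\<lambda>y::real^'b. \<chi> i. y $ \<phi> i"
  have meas: "?R \<in> borel_measurable borel"
    by (intro borel_measurable_continuous_onI continuous_intros) 
  fix l u :: "real^'a"
  assume le: "\<And>b. b \<in> Basis \<Longrightarrow> l \<bullet> b \<le> u \<bullet> b"
  let ?l = "\<chi> j. l $ inv \<phi> j" and ?u = "\<chi> j. u $ inv \<phi> j"
  have pre: "?R -` box l u = box ?l ?u"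
  proof -
    have "y \<in> ?R -` box l u \<longleftrightarrow> y \<in> box ?l ?u" for y
    proof -
      have "y \<in> ?R -` box l u \<longleftrightarrow> (\<forall>i. l $ i < y $ \<phi> i \<and> y $ \<phi> i < u $ i)"
        by (simp add: mem_box_cart)
      also have "\<dots> \<longleftrightarrow> (\<forall>j. l $ inv \<phi> j < y $ j \<and> y $ j < u $ inv \<phi> j)"
        by (metis bij bij_inv_eq_iff)
      also have "\<dots> \<longleftrightarrow> y \<in> box ?l ?u" by (simp add: mem_box_cart)
      finally show ?thesis .
    qed
    then show ?thesis by blast
  qed
  have le': "\<forall>b\<in>Basis. ?l \<bullet> b \<le> ?u \<bullet> b"
  proof
    fix b :: "real^'b" assume "b \<in> Basis"
    then obtain j where b: "b = axis j 1" by (auto simp: Basis_real_vec)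
    have "l \<bullet> axis (inv \<phi> j) 1 \<le> u \<bullet> axis (inv \<phi> j) 1"
      by (rule le) (simp add: Basis_real_vec)
    then show "?l \<bullet> b \<le> ?u \<bullet> b" by (simp add: b inner_axis)
  qed
  have "emeasure (distr lborel borel ?R) (box l u) = emeasure lborel (box ?l ?u)"
    by (simp add: emeasure_distr meas pre)
  also have "\<dots> = (\<Prod>b\<in>Basis. (?u - ?l) \<bullet> b)"
    using le' by (simp add: emeasure_lborel_box_eq)
  also have "\<dots> = (\<Prod>j\<in>UNIV. u $ inv \<phi> j - l $ inv \<phi> j)"
    by (simp add: prod_Basis_vec inner_axis)
  also have "\<dots> = (\<Prod>i\<in>UNIV. u $ i - l $ i)"
    using prod.reindex_bij_betw[of "inv \<phi>" UNIV UNIV "\<lambda>i. u $ i - l $ i"] bij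
    by (simp add: bij_imp_bij_inv)
  also have "\<dots> = (\<Prod>b\<in>Basis. (u - l) \<bullet> b)"
    by (simp add: prod_Basis_vec inner_axis)
  finally show "emeasure (distr lborel borel ?R) (box l u) = (\<Prod>b\<in>Basis. (u - l) \<bullet> b)"
    by (simp add: prod_ennreal)
qed simp


lemma orth_lborel_wo:
  fixes T :: "(real, 'm::{finite,wellorder}) vec \<Rightarrow> (real, 'm) vec"
  assumes T: "orthogonal_transformation T"
  shows "distr lborel borel T = lborel"
proof (rule lborel_eqI[symmetric])
  have lin: "linear T" using T orthogonal_transformation_linear by blast
  have meas: "T \<in> borel_measurable borel"
    using lin by (intro borel_measurable_continuous_onI linear_continuous_on linear_conv_bounded_linear[THEN iffD1])
  have bij: "bij T" using T orthogonal_transformation_bij by blast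
  have Ti: "orthogonal_transformation (inv T)" using T orthogonal_transformation_inv by blast
  fix l u :: "(real, 'm) vec"
  assume le: "\<And>b. b \<in> Basis \<Longrightarrow> l \<bullet> b \<le> u \<bullet> b"
  let ?S = "box l u"
  have pre: "T -` ?S = inv T ` ?S"
    using bij by (simp add: bij_vimage_eq_inv_image)
  have Sl: "?S \<in> lmeasurable" by simp
  have 1: "inv T ` ?S \<in> lmeasurable" using measurable_orthogonal_image[OF Ti Sl] .
  have 2: "measure lebesgue (inv T ` ?S) = measure lebesgue ?S" using measure_orthogonal_image[OF Ti Sl] .
  have bor: "T -` ?S \<in> sets borel" using meas measurable_sets_borel[OF meas, of ?S] by simp
  have "emeasure (distr lborel borel T) ?S = emeasure lborel (T -` ?S)"
    by (simp add: emeasure_distr meas)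
  also have "\<dots> = emeasure lebesgue (T -` ?S)"
    using bor by simp
  also have "\<dots> = ennreal (measure lebesgue (T -` ?S))"
    using 1 pre by (simp add: emeasure_eq_measure2)
  also have "\<dots> = ennreal (measure lebesgue ?S)" using 2 pre by simp
  also have "\<dots> = emeasure lebesgue ?S"
    using Sl by (simp add: emeasure_eq_measure2)
  also have "\<dots> = emeasure lborel ?S" by simp
  finally show "emeasure (distr lborel borel T) ?S = (\<Prod>b\<in>Basis. (u - l) \<bullet> b)"
    using le by (simp add: emeasure_lborel_box_eq)
qed simp

lemma orth_lborel:
  fixes T :: "real^'n \<Rightarrow> real^'n"
  assumes T: "orthogonal_transformation T"
  shows "distr lborel borel T = lborel"
proof -
  let ?\<iota> = "\<lambda>x::real^'n. (\<chi> j::'n wo. x $ Rep_wo j)"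
  let ?\<kappa> = "\<lambda>y::real^('n wo). (\<chi> i::'n. y $ Abs_wo i)"
  have bijA: "bij (Abs_wo :: 'n \<Rightarrow> 'n wo)"
    by (metis Abs_wo_inverse Rep_wo_inverse UNIV_I bij_betw_byWitness subset_UNIV)
  have bijR: "bij (Rep_wo :: 'n wo \<Rightarrow> 'n)"
    by (metis Abs_wo_inverse Rep_wo_inverse UNIV_I bij_betw_byWitness subset_UNIV)
  have K: "distr lborel borel ?\<kappa> = (lborel :: (real^'n) measure)"
    using reindex_lborel[OF bijA] .
  have I: "distr lborel borel ?\<iota> = (lborel :: (real^('n wo)) measure)"
    using reindex_lborel[OF bijR] .
  have mk: "?\<kappa> \<in> borel_measurable borel" by (intro borel_measurable_continuous_onI continuous_intros)
  have mi: "?\<iota> \<in> borel_measurable borel" by (intro borel_measurable_continuous_onI continuous_intros)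
  have lin: "linear T" using T orthogonal_transformation_linear by blast
  have mT: "T \<in> borel_measurable borel"
    using lin by (intro borel_measurable_continuous_onI linear_continuous_on linear_conv_bounded_linear[THEN iffD1])
  define T' where "T' = ?\<iota> \<circ> T \<circ> ?\<kappa>"
  have ki: "?\<kappa> (?\<iota> x) = x" for x by (simp add: vec_eq_iff Abs_wo_inverse)
  have ik: "?\<iota> (?\<kappa> y) = y" for y by (simp add: vec_eq_iff Rep_wo_inverse)
  have inner_i: "?\<iota> x \<bullet> ?\<iota> y = x \<bullet> y" for x y
  proof -
    have "?\<iota> x \<bullet> ?\<iota> y = (\<Sum>j\<in>UNIV. x $ Rep_wo j * y $ Rep_wo j)" by (simp add: inner_vec_def)
    also have "\<dots> = (\<Sum>i\<in>UNIV. x $ i * y $ i)"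
      using sum.reindex_bij_betw[OF bijR, of "\<lambda>i. x $ i * y $ i"] by simp
    finally show ?thesis by (simp add: inner_vec_def)
  qed
  have inner_k: "?\<kappa> x \<bullet> ?\<kappa> y = x \<bullet> y" for x y
    by (metis inner_i ik)
  have lin_i: "linear ?\<iota>" by (auto simp: linear_iff vec_eq_iff)
  have lin_k: "linear ?\<kappa>" by (auto simp: linear_iff vec_eq_iff)
  have norm_i: "norm (?\<iota> x) = norm x" for x by (simp add: norm_eq_sqrt_inner inner_i)
  have norm_k: "norm (?\<kappa> x) = norm x" for x by (simp add: norm_eq_sqrt_inner inner_k)
  have T': "orthogonal_transformation T'"
    unfolding orthogonal_transformation T'_def
    using lin lin_i lin_k T norm_i norm_k
    by (auto simp: orthogonal_transformation intro!: linear_compose)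
  have eq: "T \<circ> ?\<kappa> = ?\<kappa> \<circ> T'" unfolding T'_def comp_def by (rule ext) (rule ki[symmetric])
  have mT': "T' \<in> borel_measurable borel"
    unfolding T'_def using measurable_comp[OF measurable_comp[OF mk mT] mi] by (simp add: comp_assoc)
  have "distr lborel borel T = distr (distr lborel borel ?\<kappa>) borel T" by (simp add: K)
  also have "\<dots> = distr lborel borel (T \<circ> ?\<kappa>)" by (simp add: distr_distr mk mT)
  also have "\<dots> = distr lborel borel (?\<kappa> \<circ> T')" by (simp add: eq)
  also have "\<dots> = distr (distr lborel borel T') borel ?\<kappa>" by (simp add: distr_distr mk mT')
  also have "\<dots> = distr lborel borel ?\<kappa>" by (simp add: orth_lborel_wo[OF T'])
  also have "\<dots> = lborel" by (simp add: K)
  finally show ?thesis .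
qed


lemma scale_measure_density:
  assumes "r \<ge> 0"
  shows "scale_measure (ennreal r) M = density M (\<lambda>_. ennreal r)"
proof (rule measure_eqI)
  show "sets (scale_measure (ennreal r) M) = sets (density M (\<lambda>_. ennreal r))" by simp
  fix A assume "A \<in> sets (scale_measure (ennreal r) M)"
  then have A: "A \<in> sets M" by simp
  show "emeasure (scale_measure (ennreal r) M) A = emeasure (density M (\<lambda>_. ennreal r)) A"
    using A by (simp add: emeasure_density nn_integral_cmult_indicator)
qed

lemma sphere_measure_eq:
  "(sphere_measure :: (real^'n) measure) =
     density (distr (restrict_space lborel (ball 0 1)) borel sgn) (\<lambda>_. ennreal (real CARD('n)))"
  unfolding sphere_measure_def sgn_div_norm[symmetric]
  by (rule scale_measure_density) simp

lemma sphere_integral: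
  fixes f :: "real^'n \<Rightarrow> 'b::{banach,second_countable_topology}"
  assumes f[measurable]: "f \<in> borel_measurable borel"
  shows "integral\<^sup>L sphere_measure f =
           real CARD('n) *\<^sub>R (\<integral>x. indicator (ball 0 1) x *\<^sub>R f (sgn x) \<partial>lborel)"
proof -
  have ms: "sgn \<in> measurable (restrict_space lborel (ball (0::real^'n) 1)) borel"
    by (rule measurable_restrict_space1) simp
  have "integral\<^sup>L sphere_measure f =
      (\<integral>x. real CARD('n) *\<^sub>R f x \<partial>distr (restrict_space lborel (ball 0 1)) borel sgn)"
    unfolding sphere_measure_eq by (rule integral_density) (auto intro: ms)
  also have "\<dots> = real CARD('n) *\<^sub>R (\<integral>x. f x \<partial>distr (restrict_space lborel (ball 0 1)) borel sgn)"
    by simp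
  also have "(\<integral>x. f x \<partial>distr (restrict_space lborel (ball 0 1)) borel sgn) =
      (\<integral>x. f (sgn x) \<partial>restrict_space lborel (ball 0 1))"
    by (rule integral_distr[OF ms f])
  also have "\<dots> = (\<integral>x. indicator (ball 0 1) x *\<^sub>R f (sgn x) \<partial>lborel)"
    by (rule integral_restrict_space) simp
  finally show ?thesis .
qed

lemma sphere_integrable:
  fixes f :: "real^'n \<Rightarrow> 'b::{banach,second_countable_topology}"
  assumes f[measurable]: "f \<in> borel_measurable borel"
  shows "integrable sphere_measure f \<longleftrightarrow>
           integrable lborel (\<lambda>x. indicator (ball (0::real^'n) 1) x *\<^sub>R f (sgn x))"
proof -
  have ms: "sgn \<in> measurable (restrict_space lborel (ball (0::real^'n) 1)) borel"
    by (rule measurable_restrict_space1) simp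
  have "integrable sphere_measure f \<longleftrightarrow>
      integrable (distr (restrict_space lborel (ball 0 1)) borel sgn) (\<lambda>x. real CARD('n) *\<^sub>R f x)"
    unfolding sphere_measure_eq by (rule integrable_density) (auto intro: ms)
  also have "\<dots> \<longleftrightarrow> integrable (distr (restrict_space lborel (ball 0 1)) borel sgn) f"
  proof
    assume "integrable (distr (restrict_space lborel (ball 0 1)) borel sgn) (\<lambda>x. real CARD('n) *\<^sub>R f x)"
    then have "integrable (distr (restrict_space lborel (ball 0 1)) borel sgn) (\<lambda>x. (1 / real CARD('n)) *\<^sub>R (real CARD('n) *\<^sub>R f x))"
      by (rule integrable_scaleR_right)
    then show "integrable (distr (restrict_space lborel (ball 0 1)) borel sgn) f" by simp
  qed simp
  also have "\<dots> \<longleftrightarrow> integrable (restrict_space lborel (ball (0::real^'n) 1)) (\<lambda>x. f (sgn x))"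
    by (rule integrable_distr_eq[OF ms f])
  also have "\<dots> \<longleftrightarrow> integrable lborel (\<lambda>x. indicator (ball (0::real^'n) 1) x *\<^sub>R f (sgn x))"
    by (rule integrable_restrict_space) simp
  finally show ?thesis .
qed

lemma sphere_integrable_cont:
  fixes f :: "real^'n \<Rightarrow> 'b::{banach,second_countable_topology}"
  assumes f: "continuous_on UNIV f"
  shows "integrable sphere_measure f"
proof -
  have fm[measurable]: "f \<in> borel_measurable borel"
    using f by (rule borel_measurable_continuous_onI)
  have "compact (f ` cball 0 1)"
    by (rule compact_continuous_image) (use f continuous_on_subset in auto)
  then obtain B where B: "\<And>y. y \<in> f ` cball 0 1 \<Longrightarrow> norm y \<le> B"
    by (meson bounded_iff compact_imp_bounded)
  have "integrable lborel (\<lambda>x. indicator (ball (0::real^'n) 1) x *\<^sub>R f (sgn x))"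
  proof (rule integrableI_bounded_set_indicator[where B=B])
    show "emeasure lborel (ball (0::real^'n) 1) < \<infinity>" by (rule emeasure_bounded_finite) simp
    show "AE x in lborel. x \<in> ball 0 1 \<longrightarrow> norm (f (sgn x)) \<le> B"
      by (intro AE_I2 impI B) (auto simp: norm_sgn)
  qed auto
  then show ?thesis by (simp add: sphere_integrable)
qed

lemma sphere_orth_invariant:
  fixes f :: "real^'n \<Rightarrow> 'b::{banach,second_countable_topology}" and T :: "real^'n \<Rightarrow> real^'n"
  assumes f[measurable]: "f \<in> borel_measurable borel"
    and T: "orthogonal_transformation T"
  shows "(\<integral>x. f (T x) \<partial>sphere_measure) = integral\<^sup>L sphere_measure f"
proof -
  have lin: "linear T" using T orthogonal_transformation_linear by blast
  have mT[measurable]: "T \<in> borel_measurable borel"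
    using lin by (intro borel_measurable_continuous_onI linear_continuous_on linear_conv_bounded_linear[THEN iffD1])
  have nT: "norm (T x) = norm x" for x using T orthogonal_transformation_norm by blast
  have sT: "T (sgn x) = sgn (T x)" for x
    by (simp add: sgn_div_norm nT linear_scale[OF lin])
  have [measurable]: "ball (0::real^'n) 1 \<in> sets borel" by simp
  have iT: "indicator (ball (0::real^'n) 1) (T x) = (indicator (ball 0 1) x :: real)" for x
    by (simp add: indicator_def nT)
  have "(\<integral>x. f (T x) \<partial>sphere_measure) =
     real CARD('n) *\<^sub>R (\<integral>x. indicator (ball 0 1) x *\<^sub>R f (T (sgn x)) \<partial>lborel)"
    using sphere_integral[of "\<lambda>x::real^'n. f (T x)"] by simp
  also have "(\<integral>x. indicator (ball 0 1) x *\<^sub>R f (T (sgn x)) \<partial>lborel) =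
      (\<integral>x. (\<lambda>y. indicator (ball 0 1) y *\<^sub>R f (sgn y)) (T x) \<partial>lborel)"
    by (simp add: sT iT)
  also have "\<dots> = (\<integral>y. indicator (ball 0 1) y *\<^sub>R f (sgn y) \<partial>distr lborel borel T)"
    by (rule integral_distr[symmetric]) measurable
  also have "\<dots> = (\<integral>y. indicator (ball 0 1) y *\<^sub>R f (sgn y) \<partial>lborel)"
    by (simp add: orth_lborel[OF T])
  also have "real CARD('n) *\<^sub>R \<dots> = integral\<^sup>L sphere_measure f"
    by (rule sphere_integral[symmetric]) fact
  finally show ?thesis .
qed

lemma sphere_AE_norm: "AE x in (sphere_measure :: (real^'n) measure). norm x = 1"
proof -
  have ms: "sgn \<in> measurable (restrict_space lborel (ball (0::real^'n) 1)) borel"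
    by (rule measurable_restrict_space1) simp
  have "AE x in restrict_space lborel (ball (0::real^'n) 1). x \<noteq> 0"
  proof (subst AE_restrict_space_iff)
    show "AE x in lborel. x \<in> ball 0 1 \<longrightarrow> x \<noteq> 0"
      using AE_lborel_singleton[of 0] by eventually_elim auto
  qed simp
  then have "AE x in restrict_space lborel (ball (0::real^'n) 1). norm (sgn x) = 1"
    by eventually_elim (simp add: norm_sgn)
  then have "AE x in distr (restrict_space lborel (ball (0::real^'n) 1)) borel sgn. norm x = 1"
    by (subst AE_distr_iff[OF ms]) auto
  then show ?thesis
    unfolding sphere_measure_eq by (subst AE_density) auto
qed

lemma sphere_measure_pos: "(\<integral>x. (1::real) \<partial>(sphere_measure :: (real^'n) measure)) > 0"
proof -
  have "(\<integral>x. (1::real) \<partial>(sphere_measure :: (real^'n) measure)) =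
      real CARD('n) *\<^sub>R (\<integral>x. indicator (ball (0::real^'n) 1) x *\<^sub>R 1 \<partial>lborel)"
    by (rule sphere_integral) simp
  also have "(\<integral>x. indicator (ball (0::real^'n) 1) x *\<^sub>R (1::real) \<partial>lborel) = measure lborel (ball (0::real^'n) 1)"
    by simp
  finally have eq: "(\<integral>x. (1::real) \<partial>(sphere_measure :: (real^'n) measure)) = real CARD('n) * measure lborel (ball (0::real^'n) 1)"
    by simp
  have "measure lborel (ball (0::real^'n) 1) > 0" by simp
  moreover have "real CARD('n) > 0" by simp
  ultimately show ?thesis using eq by (metis mult_pos_pos)
qed


lemma refl_orth:
  fixes v :: "real^'n"
  assumes v: "norm v = 1"
  shows "orthogonal_transformation (\<lambda>x. x - (2 * (x \<bullet> v)) *\<^sub>R v)"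
proof -
  have vv: "v \<bullet> v = 1" using v by (simp add: norm_eq_1)
  show ?thesis
    unfolding orthogonal_transformation_def
  proof (intro conjI allI)
    show "linear (\<lambda>x. x - (2 * (x \<bullet> v)) *\<^sub>R v)"
      by (auto simp: linear_iff inner_simps algebra_simps)
    fix x y :: "real^'n"
    show "(x - (2 * (x \<bullet> v)) *\<^sub>R v) \<bullet> (y - (2 * (y \<bullet> v)) *\<^sub>R v) = x \<bullet> y"
      by (simp add: inner_simps vv algebra_simps inner_commute)
  qed
qed

definition rotm :: "real^'n \<Rightarrow> real^'n \<Rightarrow> real \<Rightarrow> real \<Rightarrow> real^'n \<Rightarrow> real^'n" where
  "rotm e b c s x = x + ((c - 1) * (x \<bullet> e) - s * (x \<bullet> b)) *\<^sub>R e + (s * (x \<bullet> e) + (c - 1) * (x \<bullet> b)) *\<^sub>R b"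

lemma rotm_orth:
  fixes e b :: "real^'n"
  assumes e: "norm e = 1" and b: "norm b = 1" and eb: "e \<bullet> b = 0" and cs: "c\<^sup>2 + s\<^sup>2 = 1"
  shows "orthogonal_transformation (rotm e b c s)"
proof -
  have ee: "e \<bullet> e = 1" using e by (simp add: norm_eq_1)
  have bb: "b \<bullet> b = 1" using b by (simp add: norm_eq_1)
  have be: "b \<bullet> e = 0" using eb by (simp add: inner_commute)
  show ?thesis
    unfolding orthogonal_transformation_def
  proof (intro conjI allI)
    show "linear (rotm e b c s)"
      by (auto simp: linear_iff inner_simps algebra_simps rotm_def)
    fix x y :: "real^'n"
    define u where "u = x \<bullet> e" define v where "v = x \<bullet> b"
    define u' where "u' = y \<bullet> e" define v' where "v' = y \<bullet> b"
    have "rotm e b c s x \<bullet> rotm e b c s y = x \<bullet> y + ((c - 1) * u - s * v) * u' + (s * u + (c - 1) * v) * v'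
       + ((c - 1) * u' - s * v') * u + ((c - 1) * u - s * v) * ((c - 1) * u' - s * v')
       + (s * u' + (c - 1) * v') * v + (s * u + (c - 1) * v) * (s * u' + (c - 1) * v')"
      unfolding rotm_def u_def v_def u'_def v'_def
      by (simp add: inner_simps ee bb eb be inner_commute algebra_simps)
    also have "\<dots> = x \<bullet> y + (c\<^sup>2 + s\<^sup>2 - 1) * (u * u' + v * v')"
      by (simp add: algebra_simps power2_eq_square)
    finally show "rotm e b c s x \<bullet> rotm e b c s y = x \<bullet> y" using cs by simp
  qed
qed

lemma rotm_e:
  fixes e b :: "real^'n"
  assumes e: "norm e = 1" and eb: "e \<bullet> b = 0"
  shows "rotm e b c s x \<bullet> e = c * (x \<bullet> e) - s * (x \<bullet> b)"
proof -
  have ee: "e \<bullet> e = 1" using e by (simp add: norm_eq_1)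
  have be: "b \<bullet> e = 0" using eb by (simp add: inner_commute)
  show ?thesis unfolding rotm_def by (simp add: inner_simps ee be algebra_simps)
qed

lemma sets_sphere_measure: "sets (sphere_measure :: (real^'n) measure) = sets borel"
  by (simp add: sphere_measure_eq)

lemma sphere_meas_cont:
  fixes f :: "real^'n \<Rightarrow> 'b::{banach,second_countable_topology}"
  assumes "continuous_on UNIV f"
  shows "f \<in> borel_measurable sphere_measure"
  using borel_measurable_continuous_onI[OF assms]
  by (simp add: measurable_cong_sets[OF sets_sphere_measure refl])

definition mom :: "real^'n \<Rightarrow> nat \<Rightarrow> real" where
  "mom e k = (\<integral>x. (x \<bullet> e) ^ k \<partial>sphere_measure)"

lemma cont_inner_pow [continuous_intros]:
  "continuous_on UNIV (\<lambda>x::real^'n. (x \<bullet> e) ^ k)"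
  by (intro continuous_intros)

lemma mom_odd:
  fixes e :: "real^'n"
  assumes "odd k"
  shows "mom e k = 0"
proof -
  have T: "orthogonal_transformation (\<lambda>x::real^'n. - x)"
    using orthogonal_transformation_neg[of "\<lambda>x. x"] by simp
  have m: "(\<lambda>x::real^'n. (x \<bullet> e) ^ k) \<in> borel_measurable borel"
    by (intro borel_measurable_continuous_onI continuous_intros)
  have "mom e k = (\<integral>x. ((- x) \<bullet> e) ^ k \<partial>sphere_measure)"
    unfolding mom_def by (rule sphere_orth_invariant[OF m T, symmetric])
  also have "\<dots> = (\<integral>x. - ((x \<bullet> e) ^ k) \<partial>sphere_measure)"
    using assms by (simp add: power_minus_odd)
  also have "\<dots> = - mom e k" unfolding mom_def by simp
  finally show ?thesis by simp
qed

lemma sphere_perp_zero: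
  fixes e v :: "real^'n" and g :: "real \<Rightarrow> real"
  assumes g: "continuous_on UNIV g" and ve: "v \<bullet> e = 0"
  shows "(\<integral>x. g (x \<bullet> e) * (x \<bullet> v) \<partial>sphere_measure) = 0"
proof (cases "v = 0")
  case True then show ?thesis by simp
next
  case False
  define w where "w = v /\<^sub>R norm v"
  have w: "norm w = 1" using False by (simp add: w_def)
  have we: "w \<bullet> e = 0" using ve by (simp add: w_def)
  have wv: "w \<bullet> v = norm v" using False by (simp add: w_def dot_square_norm power2_eq_square)
  let ?R = "\<lambda>x::real^'n. x - (2 * (x \<bullet> w)) *\<^sub>R w"
  have T: "orthogonal_transformation ?R" by (rule refl_orth[OF w])
  have cg: "continuous_on UNIV (\<lambda>x::real^'n. g (x \<bullet> e) * (x \<bullet> v))"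
    by (intro continuous_intros continuous_on_compose2[OF g]) auto
  have m: "(\<lambda>x::real^'n. g (x \<bullet> e) * (x \<bullet> v)) \<in> borel_measurable borel"
    using cg by (rule borel_measurable_continuous_onI)
  have xv: "x \<bullet> v = norm v * (x \<bullet> w)" for x
    using False by (simp add: w_def)
  have Re: "?R x \<bullet> e = x \<bullet> e" for x by (simp add: inner_simps we)
  have Rv: "?R x \<bullet> v = - (x \<bullet> v)" for x
    using w by (simp add: inner_simps wv xv norm_eq_1 algebra_simps)
  have "(\<integral>x. g (x \<bullet> e) * (x \<bullet> v) \<partial>sphere_measure) = (\<integral>x. g (?R x \<bullet> e) * (?R x \<bullet> v) \<partial>sphere_measure)"
    by (rule sphere_orth_invariant[OF m T, symmetric])
  also have "\<dots> = (\<integral>x. - (g (x \<bullet> e) * (x \<bullet> v)) \<partial>sphere_measure)"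
    by (simp add: Re Rv)
  finally show ?thesis by simp
qed

lemma mom_rot_identity:
  fixes e b :: "real^'n"
  assumes e: "norm e = 1" and b: "norm b = 1" and eb: "e \<bullet> b = 0"
  shows "(\<integral>x. ((x \<bullet> e) - s * (x \<bullet> b)) ^ (2 * p) \<partial>sphere_measure) = (1 + s\<^sup>2) ^ p * mom e (2 * p)"
proof -
  define r where "r = sqrt (1 + s\<^sup>2)"
  have r: "r > 0" unfolding r_def by (simp add: add_pos_nonneg)
  have r2: "r\<^sup>2 = 1 + s\<^sup>2" unfolding r_def by (simp add: add_nonneg_nonneg)
  define c where "c = 1 / r"
  define s' where "s' = s / r"
  have s2: "1 + s\<^sup>2 > 0" by (simp add: add_pos_nonneg)
  have cs: "c\<^sup>2 + s'\<^sup>2 = 1" using s2 by (simp add: c_def s'_def power_divide r2 add_divide_distrib[symmetric])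
  have T: "orthogonal_transformation (rotm e b c s')" by (rule rotm_orth[OF e b eb cs])
  have m: "(\<lambda>x::real^'n. (x \<bullet> e) ^ (2 * p)) \<in> borel_measurable borel"
    by (intro borel_measurable_continuous_onI continuous_intros)
  have eq: "((x \<bullet> e) - s * (x \<bullet> b)) ^ (2 * p) = (1 + s\<^sup>2) ^ p * (rotm e b c s' x \<bullet> e) ^ (2 * p)" for x
  proof -
    have "(x \<bullet> e) - s * (x \<bullet> b) = r * (rotm e b c s' x \<bullet> e)"
      using r by (simp add: rotm_e[OF e eb] c_def s'_def right_diff_distrib)
    then have "((x \<bullet> e) - s * (x \<bullet> b)) ^ (2 * p) = (r\<^sup>2) ^ p * (rotm e b c s' x \<bullet> e) ^ (2 * p)"
      by (simp add: power_mult_distrib power_mult)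
    then show ?thesis by (simp add: r2)
  qed
  have "(\<integral>x. ((x \<bullet> e) - s * (x \<bullet> b)) ^ (2 * p) \<partial>sphere_measure) =
      (1 + s\<^sup>2) ^ p * (\<integral>x. (rotm e b c s' x \<bullet> e) ^ (2 * p) \<partial>sphere_measure)"
    by (simp add: eq)
  also have "(\<integral>x. (rotm e b c s' x \<bullet> e) ^ (2 * p) \<partial>sphere_measure) = mom e (2 * p)"
    unfolding mom_def by (rule sphere_orth_invariant[OF m T])
  finally show ?thesis .
qed

lemma coeff_x2p: "coeff ([:1, 0, 1:] ^ p) 0 = (1::real) \<and> coeff ([:1, 0, 1:] ^ p) 2 = (of_nat p :: real)"
proof (induction p)
  case 0 then show ?case by simp
next
  case (Suc p)
  let ?Q = "[:1, 0, 1:] ^ p :: real poly"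
  have "[:1, 0, 1:] ^ Suc p = ?Q + pCons 0 (pCons 0 ?Q)"
    by (simp add: mult_pCons_left algebra_simps)
  then show ?case using Suc by (simp add: coeff_pCons numeral_2_eq_2)
qed

lemma mom_mixed:
  fixes e b :: "real^'n"
  assumes e: "norm e = 1" and b: "norm b = 1" and eb: "e \<bullet> b = 0" and p: "p \<ge> 1"
  shows "(2 * real p - 1) * (\<integral>x. (x \<bullet> e) ^ (2 * p - 2) * (x \<bullet> b)\<^sup>2 \<partial>sphere_measure) = mom e (2 * p)"
proof -
  define n where "n = 2 * p"
  define A where "A k = (\<integral>x. (x \<bullet> b) ^ k * (x \<bullet> e) ^ (n - k) \<partial>sphere_measure)" for k
  define a where "a k = real (n choose k) * (-1) ^ k * A k" for k
  have int: "integrable sphere_measure (\<lambda>x::real^'n. (x \<bullet> b) ^ k * (x \<bullet> e) ^ (n - k))" for k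
    by (intro sphere_integrable_cont continuous_intros)
  have expand: "(\<integral>x. ((x \<bullet> e) - s * (x \<bullet> b)) ^ n \<partial>sphere_measure) = (\<Sum>k\<le>n. a k * s ^ k)" for s
  proof -
    have "((x \<bullet> e) - s * (x \<bullet> b)) ^ n = (\<Sum>k\<le>n. (real (n choose k) * (-1) ^ k * s ^ k) * ((x \<bullet> b) ^ k * (x \<bullet> e) ^ (n - k)))" for x :: "real^'n"
    proof -
      have "((x \<bullet> e) - s * (x \<bullet> b)) ^ n = ((- s * (x \<bullet> b)) + (x \<bullet> e)) ^ n" by simp
      also have "\<dots> = (\<Sum>k\<le>n. real (n choose k) * (- s * (x \<bullet> b)) ^ k * (x \<bullet> e) ^ (n - k))"
        by (rule binomial_ring)
      also have "\<dots> = (\<Sum>k\<le>n. (real (n choose k) * (-1) ^ k * s ^ k) * ((x \<bullet> b) ^ k * (x \<bullet> e) ^ (n - k)))"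
        by (intro sum.cong refl) (simp only: power_mult_distrib[of "- s" "x \<bullet> b"] power_minus[of s] mult.assoc mult.left_commute)
      finally show ?thesis .
    qed
    then have "(\<integral>x. ((x \<bullet> e) - s * (x \<bullet> b)) ^ n \<partial>sphere_measure) =
        (\<integral>x. (\<Sum>k\<le>n. (real (n choose k) * (-1) ^ k * s ^ k) * ((x \<bullet> b) ^ k * (x \<bullet> e) ^ (n - k))) \<partial>sphere_measure)"
      by simp
    also have "\<dots> = (\<Sum>k\<le>n. (\<integral>x. (real (n choose k) * (-1) ^ k * s ^ k) * ((x \<bullet> b) ^ k * (x \<bullet> e) ^ (n - k)) \<partial>sphere_measure))"
      by (rule Bochner_Integration.integral_sum[where f="\<lambda>k x. (real (n choose k) * (-1) ^ k * s ^ k) * ((x \<bullet> b) ^ k * (x \<bullet> e) ^ (n - k))"])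
         (auto intro!: integrable_mult_right int)
    also have "\<dots> = (\<Sum>k\<le>n. a k * s ^ k)"
      by (intro sum.cong refl) (simp add: a_def A_def)
    finally show ?thesis .
  qed
  have polyeq: "poly (\<Sum>k\<le>n. monom (a k) k) s = poly (smult (mom e n) ([:1, 0, 1:] ^ p)) s" for s
  proof -
    have "poly (\<Sum>k\<le>n. monom (a k) k) s = (\<Sum>k\<le>n. a k * s ^ k)"
      by (simp add: poly_sum poly_monom)
    also have "\<dots> = (1 + s\<^sup>2) ^ p * mom e n"
      using expand[of s] mom_rot_identity[OF e b eb, of s p] by (simp add: n_def)
    also have "\<dots> = poly (smult (mom e n) ([:1, 0, 1:] ^ p)) s"
      by (simp add: poly_power power2_eq_square)
    finally show ?thesis .
  qed
  then have P: "(\<Sum>k\<le>n. monom (a k) k) = smult (mom e n) ([:1, 0, 1:] ^ p)"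
    by (subst poly_eq_poly_eq_iff[symmetric]) (rule ext)
  have n2: "2 \<le> n" using p by (simp add: n_def)
  have "coeff (\<Sum>k\<le>n. monom (a k) k) 2 = a 2"
    using n2 by (simp add: coeff_sum coeff_monom)
  also have "coeff (\<Sum>k\<le>n. monom (a k) k) 2 = mom e n * real p"
    unfolding P using coeff_x2p[of p] by simp
  finally have a2: "a 2 = mom e n * real p" ..
  have ch: "real (n choose 2) = real p * (2 * real p - 1)"
  proof -
    have "n choose 2 = p * (2 * p - 1)" unfolding choose_two n_def
      by (cases p) (auto simp: algebra_simps)
    then show ?thesis using p by (simp add: of_nat_diff)
  qed
  have A2: "A 2 = (\<integral>x. (x \<bullet> e) ^ (2 * p - 2) * (x \<bullet> b)\<^sup>2 \<partial>sphere_measure)"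
    unfolding A_def n_def by (simp add: mult.commute)
  have "real p * ((2 * real p - 1) * A 2) = real p * mom e n"
    using a2 ch by (simp add: a_def algebra_simps)
  then have "(2 * real p - 1) * A 2 = mom e n" using p by simp
  then show ?thesis using A2 by (simp add: n_def)
qed

lemma mom_mixed_gen:
  fixes e b :: "real^'n"
  assumes e: "norm e = 1" and eb: "e \<bullet> b = 0" and k: "even k"
  shows "(real k + 1) * (\<integral>x. (x \<bullet> e) ^ k * (x \<bullet> b)\<^sup>2 \<partial>sphere_measure) = (norm b)\<^sup>2 * mom e (k + 2)"
proof (cases "b = 0")
  case True then show ?thesis by simp
next
  case False
  define b' where "b' = b /\<^sub>R norm b"
  have b': "norm b' = 1" using False by (simp add: b'_def)
  have eb': "e \<bullet> b' = 0" using eb by (simp add: b'_def)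
  obtain p' where p': "k = 2 * p'" using k by blast
  have "(2 * real (Suc p') - 1) * (\<integral>x. (x \<bullet> e) ^ (2 * Suc p' - 2) * (x \<bullet> b')\<^sup>2 \<partial>sphere_measure) = mom e (2 * Suc p')"
    by (rule mom_mixed[OF e b' eb']) simp
  then have 1: "(real k + 1) * (\<integral>x. (x \<bullet> e) ^ k * (x \<bullet> b')\<^sup>2 \<partial>sphere_measure) = mom e (k + 2)"
    using p' by (simp add: add.commute)
  have xb: "(x \<bullet> b)\<^sup>2 = (norm b)\<^sup>2 * (x \<bullet> b')\<^sup>2" for x
    using False by (simp add: b'_def power_mult_distrib field_simps)
  have "(\<integral>x. (x \<bullet> e) ^ k * (x \<bullet> b)\<^sup>2 \<partial>sphere_measure) = (norm b)\<^sup>2 * (\<integral>x. (x \<bullet> e) ^ k * (x \<bullet> b')\<^sup>2 \<partial>sphere_measure)"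
  proof -
    have "(\<lambda>x. (x \<bullet> e) ^ k * (x \<bullet> b)\<^sup>2) = (\<lambda>x. (norm b)\<^sup>2 * ((x \<bullet> e) ^ k * (x \<bullet> b')\<^sup>2))"
      by (simp add: xb mult.left_commute)
    then show ?thesis by simp
  qed
  then have "(real k + 1) * (\<integral>x. (x \<bullet> e) ^ k * (x \<bullet> b)\<^sup>2 \<partial>sphere_measure) =
      (norm b)\<^sup>2 * ((real k + 1) * (\<integral>x. (x \<bullet> e) ^ k * (x \<bullet> b')\<^sup>2 \<partial>sphere_measure))"
    by (simp only: mult.left_commute)
  then show ?thesis by (simp only: 1)
qed

lemma norm_sq_decomp:
  fixes e x :: "real^'n"
  assumes e: "norm e = 1"
  shows "(norm x)\<^sup>2 = (x \<bullet> e)\<^sup>2 + (\<Sum>i\<in>Basis. (x \<bullet> (i - (e \<bullet> i) *\<^sub>R e))\<^sup>2)"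
proof -
  have ee: "e \<bullet> e = 1" using e by (simp add: norm_eq_1)
  have "(\<Sum>i\<in>Basis. (x \<bullet> (i - (e \<bullet> i) *\<^sub>R e))\<^sup>2) =
      (\<Sum>i\<in>Basis. (x \<bullet> i) * (x \<bullet> i) - 2 * (x \<bullet> e) * ((x \<bullet> i) * (e \<bullet> i)) + (x \<bullet> e)\<^sup>2 * ((e \<bullet> i) * (e \<bullet> i)))"
    by (intro sum.cong refl) (simp add: inner_simps power2_eq_square algebra_simps)
  also have "\<dots> = (\<Sum>i\<in>Basis. (x \<bullet> i) * (x \<bullet> i)) - 2 * (x \<bullet> e) * (\<Sum>i\<in>Basis. (x \<bullet> i) * (e \<bullet> i))
       + (x \<bullet> e)\<^sup>2 * (\<Sum>i\<in>Basis. (e \<bullet> i) * (e \<bullet> i))"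
    by (simp add: sum.distrib sum_subtractf sum_distrib_left)
  also have "\<dots> = x \<bullet> x - 2 * (x \<bullet> e) * (x \<bullet> e) + (x \<bullet> e)\<^sup>2 * (e \<bullet> e)"
    by (simp add: euclidean_inner[symmetric])
  finally have S: "(\<Sum>i\<in>Basis. (x \<bullet> (i - (e \<bullet> i) *\<^sub>R e))\<^sup>2) = x \<bullet> x - 2 * (x \<bullet> e) * (x \<bullet> e) + (x \<bullet> e)\<^sup>2 * (e \<bullet> e)" .
  have N: "(norm x)\<^sup>2 = x \<bullet> x" by (simp add: power2_norm_eq_inner)
  show ?thesis unfolding S N using ee by (simp add: power2_eq_square)
qed

lemma mom_rec:
  fixes e :: "real^'n"
  assumes e: "norm e = 1" and k: "even k"
  shows "mom e (k + 2) * (real k + real CARD('n)) = (real k + 1) * mom e k"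
proof -
  define b where "b i = i - (e \<bullet> i) *\<^sub>R e" for i :: "real^'n"
  have ee: "e \<bullet> e = 1" using e by (simp add: norm_eq_1)
  have eb: "e \<bullet> b i = 0" if "i \<in> Basis" for i by (simp add: b_def inner_simps ee)
  have nb: "(norm (b i))\<^sup>2 = 1 - (e \<bullet> i)\<^sup>2" if "i \<in> Basis" for i
    using that unfolding power2_norm_eq_inner b_def by (simp add: inner_simps ee inner_commute power2_eq_square algebra_simps)
  have int: "integrable sphere_measure (\<lambda>x::real^'n. (x \<bullet> e) ^ k * (x \<bullet> b i)\<^sup>2)" for i
    by (intro sphere_integrable_cont continuous_intros)
  have "mom e k = (\<integral>x. (x \<bullet> e) ^ k * (norm x)\<^sup>2 \<partial>sphere_measure)"
    unfolding mom_def
    by (rule integral_cong_AE) (use sphere_AE_norm in \<open>auto intro!: sphere_meas_cont continuous_intros\<close>)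
  also have "\<dots> = (\<integral>x. (x \<bullet> e) ^ (k + 2) + (\<Sum>i\<in>Basis. (x \<bullet> e) ^ k * (x \<bullet> b i)\<^sup>2) \<partial>sphere_measure)"
  proof -
    have "(x \<bullet> e) ^ k * (norm x)\<^sup>2 = (x \<bullet> e) ^ (k + 2) + (\<Sum>i\<in>Basis. (x \<bullet> e) ^ k * (x \<bullet> b i)\<^sup>2)" for x
    proof -
      have "(norm x)\<^sup>2 = (x \<bullet> e)\<^sup>2 + (\<Sum>i\<in>Basis. (x \<bullet> b i)\<^sup>2)"
        unfolding b_def by (rule norm_sq_decomp[OF e])
      then have "(x \<bullet> e) ^ k * (norm x)\<^sup>2 = (x \<bullet> e) ^ k * (x \<bullet> e)\<^sup>2 + (x \<bullet> e) ^ k * (\<Sum>i\<in>Basis. (x \<bullet> b i)\<^sup>2)"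
        by (simp add: distrib_left)
      then show ?thesis by (simp only: sum_distrib_left power_add)
    qed
    then show ?thesis by simp
  qed
  also have "\<dots> = mom e (k + 2) + (\<Sum>i\<in>Basis. (\<integral>x. (x \<bullet> e) ^ k * (x \<bullet> b i)\<^sup>2 \<partial>sphere_measure))"
    unfolding mom_def
    by (subst Bochner_Integration.integral_add)
       (auto intro!: sphere_integrable_cont continuous_intros Bochner_Integration.integral_sum int)
  finally have 1: "(real k + 1) * mom e k = (real k + 1) * mom e (k + 2) +
      (\<Sum>i\<in>Basis. (real k + 1) * (\<integral>x. (x \<bullet> e) ^ k * (x \<bullet> b i)\<^sup>2 \<partial>sphere_measure))"
    by (simp add: algebra_simps sum_distrib_left)
  also have "(\<Sum>i\<in>Basis. (real k + 1) * (\<integral>x. (x \<bullet> e) ^ k * (x \<bullet> b i)\<^sup>2 \<partial>sphere_measure)) =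
       (\<Sum>i\<in>Basis. (1 - (e \<bullet> i)\<^sup>2) * mom e (k + 2))"
    by (intro sum.cong refl) (simp add: mom_mixed_gen[OF e eb k] nb)
  also have "\<dots> = (real CARD('n) - 1) * mom e (k + 2)"
  proof -
    have "(\<Sum>i\<in>Basis. (e \<bullet> i)\<^sup>2) = e \<bullet> e" by (simp add: euclidean_inner[of e e] power2_eq_square)
    then show ?thesis by (simp add: sum_distrib_right[symmetric] sum_subtractf ee)
  qed
  finally show ?thesis by (simp add: algebra_simps)
qed

lemma sphere_vec:
  fixes e :: "real^'n" and g :: "real \<Rightarrow> real"
  assumes e: "norm e = 1" and g: "continuous_on UNIV g"
  shows "(\<integral>x. g (x \<bullet> e) *\<^sub>R x \<partial>sphere_measure) = (\<integral>x. g (x \<bullet> e) * (x \<bullet> e) \<partial>sphere_measure) *\<^sub>R e"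
proof -
  have ee: "e \<bullet> e = 1" using e by (simp add: norm_eq_1)
  have cg: "continuous_on UNIV (\<lambda>x::real^'n. g (x \<bullet> e))"
    by (intro continuous_on_compose2[OF g] continuous_intros) auto
  have intv: "integrable sphere_measure (\<lambda>x::real^'n. g (x \<bullet> e) *\<^sub>R x)"
    by (intro sphere_integrable_cont continuous_intros cg)
  define W where "W = (\<integral>x. g (x \<bullet> e) *\<^sub>R x \<partial>sphere_measure)"
  define Z where "Z = (\<integral>x. g (x \<bullet> e) * (x \<bullet> e) \<partial>sphere_measure) *\<^sub>R e"
  have "W \<bullet> y = Z \<bullet> y" for y
  proof -
    define v where "v = y - (y \<bullet> e) *\<^sub>R e"
    have ve: "v \<bullet> e = 0" by (simp add: v_def inner_simps ee inner_commute)
    have xy: "x \<bullet> y = (y \<bullet> e) * (x \<bullet> e) + x \<bullet> v" for x by (simp add: v_def inner_simps)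
    have "W \<bullet> y = (\<integral>x. g (x \<bullet> e) *\<^sub>R x \<bullet> y \<partial>sphere_measure)"
      unfolding W_def using integral_inner_left[of y sphere_measure "\<lambda>x. g (x \<bullet> e) *\<^sub>R x"] intv by simp
    also have "\<dots> = (\<integral>x. (y \<bullet> e) * (g (x \<bullet> e) * (x \<bullet> e)) + g (x \<bullet> e) * (x \<bullet> v) \<partial>sphere_measure)"
      by (simp add: xy algebra_simps)
    also have "\<dots> = (y \<bullet> e) * (\<integral>x. g (x \<bullet> e) * (x \<bullet> e) \<partial>sphere_measure) + (\<integral>x. g (x \<bullet> e) * (x \<bullet> v) \<partial>sphere_measure)"
      by (subst Bochner_Integration.integral_add)
         (auto intro!: sphere_integrable_cont continuous_intros cg)
    also have "(\<integral>x. g (x \<bullet> e) * (x \<bullet> v) \<partial>sphere_measure) = 0"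
      by (rule sphere_perp_zero[OF g ve])
    finally show ?thesis by (simp add: Z_def inner_commute)
  qed
  then have "W \<bullet> (W - Z) = Z \<bullet> (W - Z)" by blast
  then have "(W - Z) \<bullet> (W - Z) = 0" by (simp add: inner_diff_left)
  then show ?thesis unfolding W_def[symmetric] Z_def[symmetric] by simp
qed


definition Lm :: "(nat \<Rightarrow> real) \<Rightarrow> real poly \<Rightarrow> real" where
  "Lm \<mu> p = (\<Sum>k\<le>degree p. coeff p k * \<mu> k)"

lemma Lm_le: "degree p \<le> n \<Longrightarrow> Lm \<mu> p = (\<Sum>k\<le>n. coeff p k * \<mu> k)"
  unfolding Lm_def
  by (rule sum.mono_neutral_left) (auto simp: coeff_eq_0)

lemma Lm_add: "Lm \<mu> (p + q) = Lm \<mu> p + Lm \<mu> q"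
proof -
  define n where "n = max (degree p) (degree q)"
  have "degree (p + q) \<le> n" unfolding n_def by (rule degree_add_le) auto
  then show ?thesis
    by (simp add: Lm_le[of _ n] Lm_le[of p n] Lm_le[of q n] n_def sum.distrib algebra_simps)
qed

lemma Lm_smult: "Lm \<mu> (smult a p) = a * Lm \<mu> p"
  by (simp add: Lm_le[OF degree_smult_le] Lm_def sum_distrib_left mult_ac)

lemma Lm_0 [simp]: "Lm \<mu> 0 = 0" by (simp add: Lm_def)

lemma Lm_minus: "Lm \<mu> (- p) = - Lm \<mu> p"
  using Lm_smult[of \<mu> "-1" p] by simp

lemma Lm_diff: "Lm \<mu> (p - q) = Lm \<mu> p - Lm \<mu> q"
  using Lm_add[of \<mu> p "- q"] Lm_minus[of \<mu> q] by simp

lemma Lm_sum: "Lm \<mu> (\<Sum>i\<in>I. f i) = (\<Sum>i\<in>I. Lm \<mu> (f i))"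
  by (induction I rule: infinite_finite_induct) (auto simp: Lm_add)

lemma Lm_monom: "Lm \<mu> (monom a n) = a * \<mu> n"
proof -
  have "Lm \<mu> (monom a n) = (\<Sum>k\<le>n. coeff (monom a n) k * \<mu> k)"
    by (rule Lm_le) (simp add: degree_monom_le)
  also have "\<dots> = (\<Sum>k\<le>n. if k = n then a * \<mu> n else 0)"
    by (rule sum.cong) (auto simp: coeff_monom)
  finally show ?thesis by simp
qed

lemma Lm_bilinear:
  assumes "finite I" "finite J"
  shows "Lm \<mu> ((\<Sum>i\<in>I. smult (a i) (P i)) * (\<Sum>j\<in>J. smult (b j) (Q j))) =
         (\<Sum>i\<in>I. \<Sum>j\<in>J. a i * b j * Lm \<mu> (P i * Q j))"
  by (simp add: sum_product Lm_sum Lm_smult mult_ac)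

definition Xp :: "real poly" where "Xp = monom 1 1"

lemma poly_Xp [simp]: "poly Xp t = t" by (simp add: Xp_def poly_monom)
lemma pderiv_Xp [simp]: "pderiv Xp = 1" by (simp add: Xp_def pderiv_monom)

definition Dop :: "real \<Rightarrow> real poly \<Rightarrow> real poly" where
  "Dop lam p = pderiv (pderiv p) - Xp * Xp * pderiv (pderiv p) - smult (2 * lam + 1) (Xp * pderiv p)"

lemma Dop_add: "Dop lam (p + q) = Dop lam p + Dop lam q"
  by (simp add: Dop_def pderiv_add distrib_left smult_add_right algebra_simps)

lemma Dop_smult: "Dop lam (smult a p) = smult a (Dop lam p)"
  by (simp add: Dop_def pderiv_smult smult_diff_right mult_smult_right mult_smult_left smult_smult mult.commute)

lemma Dop_0 [simp]: "Dop lam 0 = 0"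
  by (simp add: Dop_def)

lemma Dop_sum: "Dop lam (\<Sum>i\<in>I. f i) = (\<Sum>i\<in>I. Dop lam (f i))"
  by (induction I rule: infinite_finite_induct) (auto simp: Dop_add)

lemma Dop_monom:
  "Dop lam (monom 1 i) =
     (if i \<ge> 2 then monom (real i * (real i - 1)) (i - 2) else 0) - monom (real i * (real i + 2 * lam)) i"
proof (cases "i \<ge> 2")
  case True
  then obtain k where k: "i = k + 2" by (metis add.commute le_iff_add)
  show ?thesis using True unfolding Dop_def Xp_def k
    by (simp add: pderiv_monom mult_monom smult_monom add_monom algebra_simps)
next
  case False
  then have "i = 0 \<or> i = 1" by auto
  then show ?thesis
  proof
    assume "i = 0" then show ?thesis by (simp add: Dop_def pderiv_monom)
  next
    assume i: "i = 1"
    show ?thesis unfolding i Dop_def Xp_def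
      by (simp add: pderiv_monom mult_monom smult_monom algebra_simps)
  qed
qed

definition Gm :: "(nat \<Rightarrow> real) \<Rightarrow> real \<Rightarrow> nat \<Rightarrow> nat \<Rightarrow> real" where
  "Gm \<mu> lam i j = (if i \<ge> 2 then real i * (real i - 1) * \<mu> (i + j - 2) else 0) - real i * (real i + 2 * lam) * \<mu> (i + j)"

lemma Lm_Dop_monom: "Lm \<mu> (Dop lam (monom 1 i) * monom 1 j) = Gm \<mu> lam i j"
  by (simp add: Dop_monom left_diff_distrib Lm_diff mult_monom Lm_monom Gm_def)

lemma Gm_key:
  assumes rec: "\<And>k. \<mu> (k + 2) * (real k + 2 * lam + 2) = (real k + 1) * \<mu> k"
    and s: "i + j = k + 2"
  shows "Gm \<mu> lam i j * (real k + 2 * lam + 2) = - (2 * lam + 1) * real i * real j * \<mu> k"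
proof -
  have j: "real j = real k + 2 - real i" using s by linarith
  consider "i \<ge> 2" | "i = 1" | "i = 0" by linarith
  then show ?thesis
  proof cases
    case 1
    have "Gm \<mu> lam i j * (real k + 2 * lam + 2) =
        real i * (real i - 1) * \<mu> k * (real k + 2 * lam + 2) - real i * (real i + 2 * lam) * (\<mu> (k + 2) * (real k + 2 * lam + 2))"
      using 1 s by (simp add: Gm_def algebra_simps)
    also have "\<dots> = real i * (real i - 1) * \<mu> k * (real k + 2 * lam + 2) - real i * (real i + 2 * lam) * ((real k + 1) * \<mu> k)"
      by (simp only: rec)
    also have "\<dots> = - (2 * lam + 1) * real i * real j * \<mu> k"
      unfolding j by (simp add: algebra_simps)
    finally show ?thesis .
  next
    case 2
    have "Gm \<mu> lam i j * (real k + 2 * lam + 2) = - (1 + 2 * lam) * (\<mu> (k + 2) * (real k + 2 * lam + 2))"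
      using 2 s by (simp add: Gm_def algebra_simps)
    also have "\<dots> = - (1 + 2 * lam) * ((real k + 1) * \<mu> k)" by (simp only: rec)
    finally show ?thesis using 2 j by (simp add: algebra_simps)
  next
    case 3
    then show ?thesis by (simp add: Gm_def)
  qed
qed

lemma Gm_sym:
  assumes rec: "\<And>k. \<mu> (k + 2) * (real k + 2 * lam + 2) = (real k + 1) * \<mu> k"
    and odd1: "\<mu> 1 = 0" and lam: "lam > 0"
  shows "Gm \<mu> lam i j = Gm \<mu> lam j i"
proof (cases "i + j \<ge> 2")
  case True
  then obtain k where s: "i + j = k + 2" by (metis add.commute le_iff_add)
  have s': "j + i = k + 2" using s by simp
  have pos: "real k + 2 * lam + 2 > 0" using lam by simp
  have "Gm \<mu> lam i j * (real k + 2 * lam + 2) = Gm \<mu> lam j i * (real k + 2 * lam + 2)"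
    using Gm_key[OF rec s] Gm_key[OF rec s'] by simp
  then show ?thesis using pos by simp
next
  case False
  then have "(i = 0 \<and> j = 0) \<or> (i = 0 \<and> j = 1) \<or> (i = 1 \<and> j = 0)" by auto
  then show ?thesis using odd1 by (auto simp: Gm_def)
qed

lemma Lm_Dop_sym:
  assumes rec: "\<And>k. \<mu> (k + 2) * (real k + 2 * lam + 2) = (real k + 1) * \<mu> k"
    and odd1: "\<mu> 1 = 0" and lam: "lam > 0"
  shows "Lm \<mu> (Dop lam p * q) = Lm \<mu> (p * Dop lam q)"
proof -
  have p: "p = (\<Sum>i\<le>degree p. smult (coeff p i) (monom 1 i))"
    by (simp add: smult_monom poly_as_sum_of_monoms)
  have q: "q = (\<Sum>j\<le>degree q. smult (coeff q j) (monom 1 j))"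
    by (simp add: smult_monom poly_as_sum_of_monoms)
  have Dp: "Dop lam p = (\<Sum>i\<le>degree p. smult (coeff p i) (Dop lam (monom 1 i)))"
    by (subst p) (simp add: Dop_sum Dop_smult)
  have Dq: "Dop lam q = (\<Sum>j\<le>degree q. smult (coeff q j) (Dop lam (monom 1 j)))"
    by (subst q) (simp add: Dop_sum Dop_smult)
  have "Lm \<mu> (Dop lam p * q) = (\<Sum>i\<le>degree p. \<Sum>j\<le>degree q. coeff p i * coeff q j * Gm \<mu> lam i j)"
    by (subst Dp, subst q, subst Lm_bilinear) (auto simp: Lm_Dop_monom)
  also have "\<dots> = (\<Sum>i\<le>degree p. \<Sum>j\<le>degree q. coeff p i * coeff q j * Gm \<mu> lam j i)"
    using Gm_sym[OF rec odd1 lam] by simp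
  also have "\<dots> = Lm \<mu> (p * Dop lam q)"
  proof -
    have "Lm \<mu> (p * Dop lam q) = Lm \<mu> (Dop lam q * p)" by (simp add: mult.commute)
    also have "\<dots> = (\<Sum>j\<le>degree q. \<Sum>i\<le>degree p. coeff q j * coeff p i * Gm \<mu> lam j i)"
      by (subst Dq, subst p, subst Lm_bilinear) (auto simp: Lm_Dop_monom)
    also have "\<dots> = (\<Sum>i\<le>degree p. \<Sum>j\<le>degree q. coeff p i * coeff q j * Gm \<mu> lam j i)"
      by (subst sum.swap) (simp add: mult_ac)
    finally show ?thesis by simp
  qed
  finally show ?thesis .
qed


fun gp :: "real \<Rightarrow> nat \<Rightarrow> real poly" where
  "gp lam 0 = 1"
| "gp lam (Suc 0) = smult (2 * lam) Xp"
| "gp lam (Suc (Suc l)) = smult (1 / (real l + 2))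
     (smult (2 * (real l + 1 + lam)) (Xp * gp lam (Suc l)) - smult (real l + 2 * lam) (gp lam l))"

lemma poly_gp: "poly (gp lam l) t = gegenbauer lam l t"
  by (induction lam l rule: gp.induct) (simp_all add: field_simps)

lemma gp_rec_pt:
  "(real l + 2) * poly (gp lam (Suc (Suc l))) t =
     2 * (real l + 1 + lam) * t * poly (gp lam (Suc l)) t - (real l + 2 * lam) * poly (gp lam l) t"
  by (simp add: field_simps)

lemma dgp_rec_pt:
  "(real l + 2) * poly (pderiv (gp lam (Suc (Suc l)))) t =
     2 * (real l + 1 + lam) * (poly (gp lam (Suc l)) t + t * poly (pderiv (gp lam (Suc l))) t)
     - (real l + 2 * lam) * poly (pderiv (gp lam l)) t"
  by (simp add: pderiv_smult pderiv_diff pderiv_mult field_simps)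

declare gp.simps(3)[simp del]

lemma gp_AB:
  "t * poly (pderiv (gp lam (Suc l))) t - poly (pderiv (gp lam l)) t = (real l + 1) * poly (gp lam (Suc l)) t \<and>
   poly (pderiv (gp lam (Suc l))) t = (real l + 2 * lam) * poly (gp lam l) t + t * poly (pderiv (gp lam l)) t"
proof (induction l)
  case 0
  then show ?case by (simp add: pderiv_smult)
next
  case (Suc l)
  define c0 where "c0 = poly (gp lam l) t"
  define c1 where "c1 = poly (gp lam (Suc l)) t"
  define c2 where "c2 = poly (gp lam (Suc (Suc l))) t"
  define d0 where "d0 = poly (pderiv (gp lam l)) t"
  define d1 where "d1 = poly (pderiv (gp lam (Suc l))) t"
  define d2 where "d2 = poly (pderiv (gp lam (Suc (Suc l)))) t"
  have A: "t * d1 - d0 = (real l + 1) * c1" and B: "d1 = (real l + 2 * lam) * c0 + t * d0"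
    using Suc unfolding c0_def c1_def d0_def d1_def by auto
  have R: "(real l + 2) * c2 = 2 * (real l + 1 + lam) * t * c1 - (real l + 2 * lam) * c0"
    unfolding c0_def c1_def c2_def by (rule gp_rec_pt)
  have DR: "(real l + 2) * d2 = 2 * (real l + 1 + lam) * (c1 + t * d1) - (real l + 2 * lam) * d0"
    unfolding c1_def d0_def d1_def d2_def by (rule dgp_rec_pt)
  have d0e: "d0 = t * d1 - (real l + 1) * c1" using A by linarith
  have E2: "(real l + 2) * d2 = (real l + 2) * ((real (Suc l) + 2 * lam) * c1 + t * d1)"
    unfolding DR d0e by (simp add: algebra_simps)
  then have B': "d2 = (real (Suc l) + 2 * lam) * c1 + t * d1"
  proof -
    have "real l + 2 \<noteq> 0" by linarith
    then show ?thesis using E2 by simp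
  qed
  have star: "(1 - t * t) * d1 = (real l + 2 * lam) * c0 - (real l + 1) * t * c1"
    using B unfolding d0e by (simp add: algebra_simps)
  have A': "t * d2 - d1 = (real (Suc l) + 1) * c2"
  proof -
    have "t * d2 - d1 = (real (Suc l) + 2 * lam) * t * c1 - (1 - t * t) * d1"
      unfolding B' by (simp add: algebra_simps)
    also have "\<dots> = (real (Suc l) + 2 * lam) * t * c1 - ((real l + 2 * lam) * c0 - (real l + 1) * t * c1)"
      unfolding star ..
    also have "\<dots> = 2 * (real l + 1 + lam) * t * c1 - (real l + 2 * lam) * c0"
      by (simp add: algebra_simps)
    also have "\<dots> = (real l + 2) * c2" using R by simp
    finally show ?thesis by (simp add: add.commute)
  qed
  show ?case using A' B' unfolding c1_def c2_def d1_def d2_def by simp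
qed


lemma gp_star_poly:
  "(1 - Xp * Xp) * pderiv (gp lam (Suc l)) = smult (real l + 2 * lam) (gp lam l) - smult (real l + 1) (Xp * gp lam (Suc l))"
proof -
  have "poly ((1 - Xp * Xp) * pderiv (gp lam (Suc l))) t =
        poly (smult (real l + 2 * lam) (gp lam l) - smult (real l + 1) (Xp * gp lam (Suc l))) t" for t
  proof -
    from gp_AB[of t lam l] have
      A: "t * poly (pderiv (gp lam (Suc l))) t - poly (pderiv (gp lam l)) t = (real l + 1) * poly (gp lam (Suc l)) t" and
      B: "poly (pderiv (gp lam (Suc l))) t = (real l + 2 * lam) * poly (gp lam l) t + t * poly (pderiv (gp lam l)) t"
      by auto
    have d0: "poly (pderiv (gp lam l)) t = t * poly (pderiv (gp lam (Suc l))) t - (real l + 1) * poly (gp lam (Suc l)) t"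
      using A by linarith
    show ?thesis using B unfolding d0 by (simp add: algebra_simps)
  qed
  then show ?thesis by (subst poly_eq_poly_eq_iff[symmetric]) (rule ext)
qed

lemma gp_eigen: "Dop lam (gp lam m) = smult (- (real m * (real m + 2 * lam))) (gp lam m)"
proof (cases m)
  case 0
  then show ?thesis by (simp add: Dop_def)
next
  case (Suc l)
  have "poly (Dop lam (gp lam (Suc l))) t = poly (smult (- (real (Suc l) * (real (Suc l) + 2 * lam))) (gp lam (Suc l))) t" for t
  proof -
    define c1 where "c1 = poly (gp lam (Suc l)) t"
    define d0 where "d0 = poly (pderiv (gp lam l)) t"
    define d1 where "d1 = poly (pderiv (gp lam (Suc l))) t"
    define e1 where "e1 = poly (pderiv (pderiv (gp lam (Suc l)))) t"
    have A: "t * d1 - d0 = (real l + 1) * c1"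
      using gp_AB[of t lam l] unfolding c1_def d0_def d1_def by auto
    have "poly (pderiv ((1 - Xp * Xp) * pderiv (gp lam (Suc l)))) t =
          poly (pderiv (smult (real l + 2 * lam) (gp lam l) - smult (real l + 1) (Xp * gp lam (Suc l)))) t"
      by (simp only: gp_star_poly)
    then have D: "(1 - t * t) * e1 - 2 * t * d1 = (real l + 2 * lam) * d0 - (real l + 1) * (c1 + t * d1)"
      unfolding c1_def d0_def d1_def e1_def
      by (simp add: pderiv_mult pderiv_diff pderiv_smult algebra_simps)
    have d0e: "d0 = t * d1 - (real l + 1) * c1" using A by linarith
    have "(1 - t * t) * e1 - (2 * lam + 1) * t * d1 = - ((real l + 1) * (real l + 1 + 2 * lam)) * c1"
      using D unfolding d0e by (simp add: algebra_simps)
    then show ?thesis unfolding c1_def d1_def e1_def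
      by (simp add: Dop_def algebra_simps)
  qed
  then show ?thesis unfolding Suc by (subst poly_eq_poly_eq_iff[symmetric]) (rule ext)
qed


fun cc :: "real \<Rightarrow> nat \<Rightarrow> real" where
  "cc lam 0 = 1"
| "cc lam (Suc l) = (real l + 2 * lam) / (real l + 1) * cc lam l"

definition Kp :: "real \<Rightarrow> nat \<Rightarrow> real poly" where
  "Kp lam m = (\<Sum>l\<le>m. smult ((real l + lam) / lam) (gp lam l))"

locale momseq =
  fixes \<mu> :: "nat \<Rightarrow> real" and lam :: real
  assumes rec: "\<And>k. \<mu> (k + 2) * (real k + 2 * lam + 2) = (real k + 1) * \<mu> k"
    and odd1: "\<mu> 1 = 0" and lam: "lam > 0"
begin

abbreviation "h l \<equiv> Lm \<mu> (gp lam l * gp lam l)"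

lemma gp_orth:
  assumes "l \<noteq> k"
  shows "Lm \<mu> (gp lam l * gp lam k) = 0"
proof -
  have "Lm \<mu> (Dop lam (gp lam l) * gp lam k) = Lm \<mu> (gp lam l * Dop lam (gp lam k))"
    by (rule Lm_Dop_sym[OF rec odd1 lam])
  then have "(real l * (real l + 2 * lam)) * Lm \<mu> (gp lam l * gp lam k) = (real k * (real k + 2 * lam)) * Lm \<mu> (gp lam l * gp lam k)"
    by (simp add: gp_eigen Lm_smult Lm_minus mult_smult_left mult_smult_right)
  moreover have "real l * (real l + 2 * lam) \<noteq> real k * (real k + 2 * lam)"
  proof
    assume "real l * (real l + 2 * lam) = real k * (real k + 2 * lam)"
    then have "(real l - real k) * (real l + real k + 2 * lam) = 0" by (simp add: algebra_simps)
    moreover have "real l + real k + 2 * lam > 0" using lam by simp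
    ultimately have "real l = real k" by simp
    then show False using assms by simp
  qed
  ultimately show ?thesis by simp
qed

lemma Xgp0: "Xp * gp lam 0 = smult (1 / (2 * lam)) (gp lam 1)"
  using lam by simp

lemma XgpS: "Xp * gp lam (Suc l) =
   smult ((real l + 2) / (2 * (real l + 1 + lam))) (gp lam (Suc (Suc l))) +
   smult ((real l + 2 * lam) / (2 * (real l + 1 + lam))) (gp lam l)"
proof -
  have pos: "real l + 1 + lam > 0" using lam by simp
  have "poly (Xp * gp lam (Suc l)) t = poly (smult ((real l + 2) / (2 * (real l + 1 + lam))) (gp lam (Suc (Suc l))) +
   smult ((real l + 2 * lam) / (2 * (real l + 1 + lam))) (gp lam l)) t" for t
  proof -
    have R: "(real l + 2) * poly (gp lam (Suc (Suc l))) t =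
     2 * (real l + 1 + lam) * t * poly (gp lam (Suc l)) t - (real l + 2 * lam) * poly (gp lam l) t"
      by (rule gp_rec_pt)
    have "poly (smult ((real l + 2) / (2 * (real l + 1 + lam))) (gp lam (Suc (Suc l))) +
      smult ((real l + 2 * lam) / (2 * (real l + 1 + lam))) (gp lam l)) t =
      ((real l + 2) * poly (gp lam (Suc (Suc l))) t) / (2 * (real l + 1 + lam)) +
      ((real l + 2 * lam) * poly (gp lam l) t) / (2 * (real l + 1 + lam))"
      by simp
    also have "\<dots> = (2 * (real l + 1 + lam) * t * poly (gp lam (Suc l)) t) / (2 * (real l + 1 + lam))"
      unfolding R by (simp add: diff_divide_distrib)
    also have "\<dots> = t * poly (gp lam (Suc l)) t" using pos by simp
    finally show ?thesis by simp
  qed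
  then show ?thesis by (subst poly_eq_poly_eq_iff[symmetric]) (rule ext)
qed


lemma Lm_1: "Lm \<mu> 1 = \<mu> 0"
  by (simp add: Lm_def)

lemma h_rec: "real (Suc l) / (2 * (real l + lam)) * h (Suc l) = (real l + 2 * lam) / (2 * (real l + 1 + lam)) * h l"
proof -
  define P where "P = Lm \<mu> (Xp * gp lam l * gp lam (Suc l))"
  have i: "P = real (Suc l) / (2 * (real l + lam)) * h (Suc l)"
  proof (cases l)
    case 0
    then show ?thesis unfolding P_def using lam by (simp add: Xgp0 Lm_smult)
  next
    case (Suc j)
    have "P = Lm \<mu> ((Xp * gp lam (Suc j)) * gp lam (Suc (Suc j)))" unfolding P_def Suc ..
    also have "\<dots> = (real j + 2) / (2 * (real j + 1 + lam)) * h (Suc (Suc j)) +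
          (real j + 2 * lam) / (2 * (real j + 1 + lam)) * Lm \<mu> (gp lam j * gp lam (Suc (Suc j)))"
      unfolding XgpS by (simp add: distrib_right Lm_add Lm_smult)
    also have "Lm \<mu> (gp lam j * gp lam (Suc (Suc j))) = 0" by (rule gp_orth) simp
    finally show ?thesis unfolding Suc by (simp add: add.commute add.left_commute)
  qed
  have ii: "P = (real l + 2 * lam) / (2 * (real l + 1 + lam)) * h l"
  proof -
    have "P = Lm \<mu> ((Xp * gp lam (Suc l)) * gp lam l)" unfolding P_def by (simp add: mult_ac)
    also have "\<dots> = (real l + 2) / (2 * (real l + 1 + lam)) * Lm \<mu> (gp lam (Suc (Suc l)) * gp lam l) +
          (real l + 2 * lam) / (2 * (real l + 1 + lam)) * h l"
      unfolding XgpS by (simp add: distrib_right Lm_add Lm_smult)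
    also have "Lm \<mu> (gp lam (Suc (Suc l)) * gp lam l) = 0" by (rule gp_orth) simp
    finally show ?thesis by simp
  qed
  show ?thesis using i ii by simp
qed

lemma hn: "h l * (real l + lam) = lam * cc lam l * \<mu> 0"
proof (induction l)
  case 0
  then show ?case by (simp add: Lm_1)
next
  case (Suc l)
  have p1: "real l + lam > 0" "real l + 1 + lam > 0" using lam by simp_all
  have E: "(real l + 1) * (h (Suc l) * (real (Suc l) + lam)) = (real l + 2 * lam) * (h l * (real l + lam))"
  proof -
    have "(real l + 1) * (h (Suc l) * (real (Suc l) + lam)) =
        (real (Suc l) / (2 * (real l + lam)) * h (Suc l)) * (2 * (real l + lam) * (real l + 1 + lam))"
      using p1 by (simp add: field_simps)
    also have "\<dots> = ((real l + 2 * lam) / (2 * (real l + 1 + lam)) * h l) * (2 * (real l + lam) * (real l + 1 + lam))"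
      by (simp only: h_rec)
    also have "\<dots> = (real l + 2 * lam) * (h l * (real l + lam))"
      using p1 by (simp add: field_simps)
    finally show ?thesis .
  qed
  then have "h (Suc l) * (real (Suc l) + lam) = (real l + 2 * lam) / real (Suc l) * (h l * (real l + lam))"
    by (simp add: field_simps add.commute)
  also have "\<dots> = lam * cc lam (Suc l) * \<mu> 0" unfolding Suc.IH by (simp add: algebra_simps)
  finally show ?case .
qed

lemma a_h: "(real j + lam) / lam * h j = cc lam j * \<mu> 0"
  using hn[of j] lam by (simp add: field_simps)

lemma Lm_gp_K: "Lm \<mu> (gp lam j * Kp lam m) = (if j \<le> m then cc lam j * \<mu> 0 else 0)"
proof -
  have "Lm \<mu> (gp lam j * Kp lam m) = (\<Sum>l\<le>m. (real l + lam) / lam * Lm \<mu> (gp lam j * gp lam l))"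
    unfolding Kp_def by (simp add: sum_distrib_left Lm_sum Lm_smult)
  also have "\<dots> = (\<Sum>l\<le>m. if l = j then (real j + lam) / lam * h j else 0)"
    by (rule sum.cong) (auto simp: gp_orth)
  also have "\<dots> = (if j \<le> m then cc lam j * \<mu> 0 else 0)"
    using a_h[of j] by simp
  finally show ?thesis .
qed

lemma Lm_KK: "Lm \<mu> (Kp lam m * Kp lam m) = \<mu> 0 * (\<Sum>l\<le>m. (real l + lam) / lam * cc lam l)"
proof -
  have "Lm \<mu> (Kp lam m * Kp lam m) = (\<Sum>l\<le>m. (real l + lam) / lam * Lm \<mu> (gp lam l * Kp lam m))"
    unfolding Kp_def[of lam m] by (simp add: sum_distrib_right Lm_sum Lm_smult)
  also have "\<dots> = (\<Sum>l\<le>m. (real l + lam) / lam * (cc lam l * \<mu> 0))"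
    by (rule sum.cong) (auto simp: Lm_gp_K)
  finally show ?thesis by (simp add: sum_distrib_left mult_ac)
qed

lemma Lm_DKK: "Lm \<mu> (Dop lam (Kp lam m) * Kp lam m) =
   - \<mu> 0 * (\<Sum>l\<le>m. (real l + lam) / lam * (real l * (real l + 2 * lam)) * cc lam l)"
proof -
  have D: "Dop lam (Kp lam m) = (\<Sum>l\<le>m. smult ((real l + lam) / lam * (- (real l * (real l + 2 * lam)))) (gp lam l))"
    unfolding Kp_def by (simp add: Dop_sum Dop_smult gp_eigen smult_smult)
  have "Lm \<mu> (Dop lam (Kp lam m) * Kp lam m) =
      (\<Sum>l\<le>m. (real l + lam) / lam * (- (real l * (real l + 2 * lam))) * Lm \<mu> (gp lam l * Kp lam m))"
    unfolding D by (simp add: sum_distrib_right Lm_sum Lm_smult Lm_minus)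
  also have "\<dots> = (\<Sum>l\<le>m. (real l + lam) / lam * (- (real l * (real l + 2 * lam))) * (cc lam l * \<mu> 0))"
    by (rule sum.cong) (auto simp: Lm_gp_K)
  finally show ?thesis by (simp add: sum_distrib_left sum_negf mult_ac)
qed

lemma Lm_XKK: "Lm \<mu> (Xp * Kp lam m * Kp lam m) = \<mu> 0 * (real m * cc lam m * (real m + 2 * lam) / (lam * (2 * lam + 1)))"
proof (induction m)
  case 0
  then show ?case using odd1 by (simp add: Kp_def Xp_def Lm_monom lam)
next
  case (Suc m)
  define a where "a = (real (Suc m) + lam) / lam"
  define G where "G = gp lam (Suc m)"
  have KS: "Kp lam (Suc m) = Kp lam m + smult a G" unfolding Kp_def a_def G_def by simp
  have exp: "Xp * Kp lam (Suc m) * Kp lam (Suc m) = Xp * Kp lam m * Kp lam m + smult a (Xp * G * Kp lam m) + smult a (Xp * G * Kp lam m) + smult (a * a) (Xp * G * G)"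
    unfolding KS by (simp add: algebra_simps smult_add_right mult_smult_left mult_smult_right smult_smult)
  have pos: "real m + 1 + lam > 0" using lam by simp
  define \<alpha> where "\<alpha> = (real m + 2) / (2 * (real m + 1 + lam))"
  define \<gamma> where "\<gamma> = (real m + 2 * lam) / (2 * (real m + 1 + lam))"
  have XG: "Xp * G = smult \<alpha> (gp lam (Suc (Suc m))) + smult \<gamma> (gp lam m)"
    unfolding G_def \<alpha>_def \<gamma>_def by (rule XgpS)
  have 1: "Lm \<mu> (Xp * G * Kp lam m) = \<gamma> * (cc lam m * \<mu> 0)"
    unfolding XG by (simp add: distrib_right Lm_add Lm_smult Lm_gp_K)
  have 2: "Lm \<mu> (Xp * G * G) = 0"
    unfolding XG by (simp add: distrib_right Lm_add Lm_smult G_def gp_orth)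
  have L: "Lm \<mu> (Xp * Kp lam (Suc m) * Kp lam (Suc m)) = Lm \<mu> (Xp * Kp lam m * Kp lam m) + 2 * a * (\<gamma> * (cc lam m * \<mu> 0))"
    unfolding exp by (simp only: Lm_add Lm_smult 1 2)
  have F: "2 * a * \<gamma> = (real m + 2 * lam) / lam"
  proof -
    have ne: "real m + 1 + lam \<noteq> 0" "lam \<noteq> 0" using pos lam by auto
    have "2 * a * \<gamma> = ((real m + 1 + lam) / (real m + 1 + lam)) * ((real m + 2 * lam) / lam)"
      unfolding a_def \<gamma>_def by (simp add: add.commute add.left_commute)
    then show ?thesis using ne by simp
  qed
  from L have "Lm \<mu> (Xp * Kp lam (Suc m) * Kp lam (Suc m)) = Lm \<mu> (Xp * Kp lam m * Kp lam m) + (2 * a * \<gamma>) * (cc lam m * \<mu> 0)"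
    by (simp add: mult.assoc)
  also have "\<dots> = \<mu> 0 * (real m * cc lam m * (real m + 2 * lam) / (lam * (2 * lam + 1))) + (real m + 2 * lam) / lam * (cc lam m * \<mu> 0)"
    unfolding Suc.IH F ..
  also have "\<dots> = \<mu> 0 * ((real m + 2 * lam) * cc lam m * (real m + 1 + 2 * lam) / (lam * (2 * lam + 1)))"
  proof -
    have ne: "2 * lam + 1 \<noteq> 0" using lam by auto
    define D where "D = lam * (2 * lam + 1)"
    have e1: "(real m + 2 * lam) / lam = (real m + 2 * lam) * (2 * lam + 1) / D"
      unfolding D_def using ne by simp
    have "\<mu> 0 * (real m * cc lam m * (real m + 2 * lam) / D) + (real m + 2 * lam) / lam * (cc lam m * \<mu> 0) =
        (\<mu> 0 * cc lam m * (real m + 2 * lam) * real m) / D + (\<mu> 0 * cc lam m * (real m + 2 * lam) * (2 * lam + 1)) / D"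
      unfolding e1 by (simp add: mult_ac)
    also have "\<dots> = (\<mu> 0 * cc lam m * (real m + 2 * lam) * (real m + (2 * lam + 1))) / D"
      by (simp only: add_divide_distrib[symmetric] distrib_left)
    finally show ?thesis unfolding D_def by (simp add: mult_ac add_ac)
  qed
  also have "(real m + 2 * lam) * cc lam m = real (Suc m) * cc lam (Suc m)"
  proof -
    have "real m + 1 \<noteq> 0" by linarith
    then show ?thesis by (simp add: add.commute)
  qed
  finally show ?case by (simp add: add.commute add.left_commute)
qed

end


lemma cc_pos: "lam > 0 \<Longrightarrow> cc lam m > 0"
  by (induction m) (auto intro!: mult_pos_pos divide_pos_pos add_nonneg_pos)

lemma cc_Suc': "real (Suc m) * cc lam (Suc m) = (real m + 2 * lam) * cc lam m"
proof -
  have "real m + 1 \<noteq> 0" by linarith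
  then show ?thesis by (simp add: add.commute)
qed

declare cc.simps(2)[simp del]

lemma S0_closed:
  assumes lam: "lam > 0"
  shows "(\<Sum>l\<le>m. (real l + lam) / lam * cc lam l) * (2 * lam * (2 * lam + 1)) =
          cc lam m * (real m + 2 * lam) * (2 * real m + 2 * lam + 1)"
proof (induction m)
  case 0
  then show ?case using lam by (simp add: algebra_simps)
next
  case (Suc m)
  define c where "c = cc lam m"
  define C where "C = cc lam (Suc m)"
  have CC: "(real m + 1) * C = (real m + 2 * lam) * c" unfolding C_def c_def using cc_Suc'[of m lam] by (simp add: add.commute)
  have "(real m + 1) * ((\<Sum>l\<le>Suc m. (real l + lam) / lam * cc lam l) * (2 * lam * (2 * lam + 1))) =
        (real m + 1) * ((\<Sum>l\<le>m. (real l + lam) / lam * cc lam l) * (2 * lam * (2 * lam + 1))) +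
        (real m + 1) * ((real m + 1 + lam) * C * 2 * (2 * lam + 1))"
  proof -
    have "(real (Suc m) + lam) / lam * C * (2 * lam * (2 * lam + 1)) = (real m + 1 + lam) * C * 2 * (2 * lam + 1)"
      using lam by (simp add: field_simps)
    then show ?thesis by (simp add: C_def algebra_simps)
  qed
  also have "\<dots> = (real m + 1) * (c * (real m + 2 * lam) * (2 * real m + 2 * lam + 1)) + (real m + 1 + lam) * ((real m + 1) * C) * 2 * (2 * lam + 1)"
    unfolding Suc.IH c_def by (simp add: algebra_simps)
  also have "\<dots> = (real m + 1) * (C * (real (Suc m) + 2 * lam) * (2 * real (Suc m) + 2 * lam + 1))"
  proof -
    have "(real m + 1 + lam) * ((real m + 1) * C) * 2 * (2 * lam + 1) = (real m + 1 + lam) * ((real m + 2 * lam) * c) * 2 * (2 * lam + 1)"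
      unfolding CC ..
    moreover have "(real m + 1) * (C * (real (Suc m) + 2 * lam) * (2 * real (Suc m) + 2 * lam + 1)) =
       ((real m + 1) * C) * (real (Suc m) + 2 * lam) * (2 * real (Suc m) + 2 * lam + 1)" by (simp add: mult_ac)
    ultimately show ?thesis unfolding CC by (simp add: algebra_simps)
  qed
  finally show ?case unfolding C_def by simp
qed


lemma S1_closed:
  assumes lam: "lam > 0"
  shows "(\<Sum>l\<le>m. (real l + lam) / lam * (real l * (real l + 2 * lam)) * cc lam l) * (2 * lam * (2 * lam + 3)) =
          cc lam m * (real m + 2 * lam) * (2 * real m + 2 * lam + 1) * real m * (real m + 2 * lam + 1)"
proof (induction m)
  case 0
  then show ?case by simp
next
  case (Suc m)
  define c where "c = cc lam m"
  define C where "C = cc lam (Suc m)"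
  have CC: "(real m + 1) * C = (real m + 2 * lam) * c" unfolding C_def c_def using cc_Suc'[of m lam] by (simp add: add.commute)
  have t: "(real (Suc m) + lam) / lam * (real (Suc m) * (real (Suc m) + 2 * lam)) * C * (2 * lam * (2 * lam + 3)) =
      2 * (2 * lam + 3) * (real m + 1 + lam) * (real m + 1 + 2 * lam) * ((real m + 1) * C)"
    using lam by (simp add: field_simps)
  have "(\<Sum>l\<le>Suc m. (real l + lam) / lam * (real l * (real l + 2 * lam)) * cc lam l) * (2 * lam * (2 * lam + 3)) =
      (\<Sum>l\<le>m. (real l + lam) / lam * (real l * (real l + 2 * lam)) * cc lam l) * (2 * lam * (2 * lam + 3)) +
      (real (Suc m) + lam) / lam * (real (Suc m) * (real (Suc m) + 2 * lam)) * C * (2 * lam * (2 * lam + 3))"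
    by (simp only: sum.atMost_Suc distrib_right C_def)
  also have "\<dots> = c * (real m + 2 * lam) * (2 * real m + 2 * lam + 1) * real m * (real m + 2 * lam + 1) +
      2 * (2 * lam + 3) * (real m + 1 + lam) * (real m + 1 + 2 * lam) * ((real m + 2 * lam) * c)"
    unfolding Suc.IH t CC c_def ..
  also have "\<dots> = ((real m + 2 * lam) * c) * (real (Suc m) + 2 * lam) * (2 * real (Suc m) + 2 * lam + 1) * (real (Suc m) + 2 * lam + 1)"
    by (simp add: algebra_simps)
  also have "\<dots> = C * (real (Suc m) + 2 * lam) * (2 * real (Suc m) + 2 * lam + 1) * real (Suc m) * (real (Suc m) + 2 * lam + 1)"
    unfolding CC[symmetric] by (simp add: algebra_simps)
  finally show ?case unfolding C_def .
qed


lemma h_deriv: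
  fixes s \<beta> u a t :: real
  assumes q: "s + 2 * t * \<beta> + t\<^sup>2 > 0"
  shows "((\<lambda>t. (u + t * a) / sqrt (s + 2 * t * \<beta> + t\<^sup>2)) has_real_derivative
          (a * (s + 2 * t * \<beta> + t\<^sup>2) - (u + t * a) * (\<beta> + t)) / ((s + 2 * t * \<beta> + t\<^sup>2) * sqrt (s + 2 * t * \<beta> + t\<^sup>2))) (at t)"
proof -
  define Q where "Q = s + 2 * t * \<beta> + t\<^sup>2"
  have Q: "Q > 0" using q by (simp add: Q_def)
  have sq: "sqrt Q * sqrt Q = Q" using Q by simp
  have "((\<lambda>t. (u + t * a) / sqrt (s + 2 * t * \<beta> + t\<^sup>2)) has_real_derivative
       (a * sqrt Q - (u + t * a) * (inverse (sqrt Q) / 2 * (2 * \<beta> + 2 * t))) / (sqrt Q * sqrt Q)) (at t)"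
    unfolding Q_def
    by (rule derivative_eq_intros DERIV_real_sqrt[THEN DERIV_chain2] refl | use q in \<open>simp add: power2_eq_square algebra_simps\<close>)+
  moreover have "(a * sqrt Q - (u + t * a) * (inverse (sqrt Q) / 2 * (2 * \<beta> + 2 * t))) / (sqrt Q * sqrt Q) =
      (a * Q - (u + t * a) * (\<beta> + t)) / (Q * sqrt Q)"
    using Q sq by (simp add: field_simps)
  ultimately show ?thesis unfolding Q_def by simp
qed


lemma h1_deriv0:
  fixes s \<beta> u a :: real
  assumes s: "s > 0"
  shows "((\<lambda>t. (a * (s + 2 * t * \<beta> + t\<^sup>2) - (u + t * a) * (\<beta> + t)) / ((s + 2 * t * \<beta> + t\<^sup>2) * sqrt (s + 2 * t * \<beta> + t\<^sup>2)))
          has_real_derivative (3 * u * \<beta>\<^sup>2 - u * s - 2 * a * \<beta> * s) / (s\<^sup>2 * sqrt s)) (at 0)"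
proof -
  have sq: "sqrt s * sqrt s = s" using s by simp
  have sp: "sqrt s > 0" using s by simp
  have "((\<lambda>t. (a * (s + 2 * t * \<beta> + t\<^sup>2) - (u + t * a) * (\<beta> + t)) / ((s + 2 * t * \<beta> + t\<^sup>2) * sqrt (s + 2 * t * \<beta> + t\<^sup>2)))
          has_real_derivative
       ((a * (2 * \<beta>) - (a * \<beta> + u)) * (s * sqrt s) - (a * s - u * \<beta>) * (2 * \<beta> * sqrt s + s * (inverse (sqrt s) / 2 * (2 * \<beta>)))) / ((s * sqrt s) * (s * sqrt s))) (at 0)"
    by (rule derivative_eq_intros DERIV_real_sqrt[THEN DERIV_chain2] refl | use s in \<open>simp add: power2_eq_square algebra_simps\<close>)+
  moreover have "((a * (2 * \<beta>) - (a * \<beta> + u)) * (s * sqrt s) - (a * s - u * \<beta>) * (2 * \<beta> * sqrt s + s * (inverse (sqrt s) / 2 * (2 * \<beta>)))) / ((s * sqrt s) * (s * sqrt s))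
      = (3 * u * \<beta>\<^sup>2 - u * s - 2 * a * \<beta> * s) / (s\<^sup>2 * sqrt s)"
  proof -
    define r where "r = sqrt s"
    have r: "r > 0" using sp by (simp add: r_def)
    have sr: "s = r * r" using sq by (simp add: r_def)
    show ?thesis unfolding r_def[symmetric] unfolding sr using r
      by (simp add: field_simps power2_eq_square)
  qed
  ultimately show ?thesis by simp
qed


lemma d2_1D:
  fixes s \<beta> u a c :: real and P :: "real poly"
  assumes s: "s > 0"
  shows "deriv (deriv (\<lambda>t. c * poly P ((u + t * a) / sqrt (s + 2 * t * \<beta> + t\<^sup>2)))) 0 =
     c * (poly (pderiv (pderiv P)) (u / sqrt s) * ((a * s - u * \<beta>) / (s * sqrt s))\<^sup>2 +
          poly (pderiv P) (u / sqrt s) * ((3 * u * \<beta>\<^sup>2 - u * s - 2 * a * \<beta> * s) / (s\<^sup>2 * sqrt s)))"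
proof -
  define q where "q t = s + 2 * t * \<beta> + t\<^sup>2" for t
  define h where "h t = (u + t * a) / sqrt (q t)" for t
  define h1 where "h1 t = (a * q t - (u + t * a) * (\<beta> + t)) / (q t * sqrt (q t))" for t
  define f1 where "f1 t = c * (poly (pderiv P) (h t) * h1 t)" for t
  have U: "open {t. q t > 0}" unfolding q_def
    by (intro open_Collect_less continuous_intros)
  have U0: "0 \<in> {t. q t > 0}" using s by (simp add: q_def)
  have dh: "(h has_real_derivative h1 t) (at t)" if "q t > 0" for t
    using h_deriv[of s t \<beta> u a] that unfolding h_def h1_def q_def by simp
  have df: "((\<lambda>t. c * poly P (h t)) has_real_derivative f1 t) (at t)" if "q t > 0" for t
    unfolding f1_def
    by (rule derivative_eq_intros DERIV_chain2[OF poly_DERIV dh[OF that]] refl | simp)+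
  have ev: "eventually (\<lambda>t. deriv (\<lambda>t. c * poly P (h t)) t = f1 t) (nhds 0)"
  proof -
    have "eventually (\<lambda>t. t \<in> {t. q t > 0}) (nhds 0)"
      using U U0 by (rule eventually_nhds_in_open)
    then show ?thesis by eventually_elim (auto intro: DERIV_imp_deriv df)
  qed
  have "deriv (deriv (\<lambda>t. c * poly P (h t))) 0 = deriv f1 0"
    by (rule deriv_cong_ev[OF ev refl])
  also have "deriv f1 0 = c * (poly (pderiv (pderiv P)) (h 0) * h1 0 * h1 0 +
      poly (pderiv P) (h 0) * ((3 * u * \<beta>\<^sup>2 - u * s - 2 * a * \<beta> * s) / (s\<^sup>2 * sqrt s)))"
  proof (rule DERIV_imp_deriv)
    have dh1: "(h1 has_real_derivative (3 * u * \<beta>\<^sup>2 - u * s - 2 * a * \<beta> * s) / (s\<^sup>2 * sqrt s)) (at 0)"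
      using h1_deriv0[OF s, where \<beta>=\<beta> and a=a and u=u] unfolding h1_def q_def by simp
    show "(f1 has_real_derivative c * (poly (pderiv (pderiv P)) (h 0) * h1 0 * h1 0 +
      poly (pderiv P) (h 0) * ((3 * u * \<beta>\<^sup>2 - u * s - 2 * a * \<beta> * s) / (s\<^sup>2 * sqrt s)))) (at 0)"
      unfolding f1_def
      by (rule derivative_eq_intros DERIV_chain2[OF poly_DERIV dh[OF U0[simplified]]] dh1 refl | simp add: algebra_simps)+
  qed
  finally show ?thesis
    unfolding h_def q_def using s by (simp add: power2_eq_square h1_def q_def)
qed


lemma basis_sums:
  fixes x z :: "real^'n"
  shows "(\<Sum>b\<in>Basis. (x \<bullet> b) * (z \<bullet> b)) = x \<bullet> z"
  by (simp add: euclidean_inner[of x z])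

lemma LB_formula:
  fixes e y :: "real^'n" and P :: "real poly" and c :: real
  assumes e: "norm e = 1" and y: "y \<noteq> 0"
  shows "laplace_beltrami (\<lambda>x. c * poly P (x \<bullet> e)) y =
     c * (poly (pderiv (pderiv P)) ((y \<bullet> e) / norm y) * (1 - ((y \<bullet> e) / norm y)\<^sup>2)
          - (real CARD('n) - 1) * ((y \<bullet> e) / norm y) * poly (pderiv P) ((y \<bullet> e) / norm y)) / (y \<bullet> y)"
proof -
  define s where "s = y \<bullet> y"
  define u where "u = y \<bullet> e"
  have s: "s > 0" using y by (simp add: s_def)
  have ns: "sqrt s = norm y" by (simp add: s_def norm_eq_sqrt_inner)
  define A where "A = poly (pderiv (pderiv P)) (u / sqrt s)"
  define B where "B = poly (pderiv P) (u / sqrt s)"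
  have tm: "deriv (deriv (\<lambda>t. (\<lambda>x. c * poly P (x \<bullet> e)) ((y + t *\<^sub>R b) /\<^sub>R norm (y + t *\<^sub>R b)))) 0 =
     c * (A * ((e \<bullet> b * s - u * (y \<bullet> b)) / (s * sqrt s))\<^sup>2 +
          B * ((3 * u * (y \<bullet> b)\<^sup>2 - u * s - 2 * (e \<bullet> b) * (y \<bullet> b) * s) / (s\<^sup>2 * sqrt s)))"
    if b: "b \<in> Basis" for b
  proof -
    have bb: "b \<bullet> b = 1" using b by simp
    have eq: "(\<lambda>t. (\<lambda>x. c * poly P (x \<bullet> e)) ((y + t *\<^sub>R b) /\<^sub>R norm (y + t *\<^sub>R b))) =
        (\<lambda>t. c * poly P ((u + t * (e \<bullet> b)) / sqrt (s + 2 * t * (y \<bullet> b) + t\<^sup>2)))"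
    proof
      fix t
      have n: "norm (y + t *\<^sub>R b) = sqrt (s + 2 * t * (y \<bullet> b) + t\<^sup>2)"
        by (simp add: norm_eq_sqrt_inner s_def inner_simps bb inner_commute power2_eq_square algebra_simps)
      have "((y + t *\<^sub>R b) /\<^sub>R norm (y + t *\<^sub>R b)) \<bullet> e = (u + t * (e \<bullet> b)) / sqrt (s + 2 * t * (y \<bullet> b) + t\<^sup>2)"
        unfolding n by (simp add: u_def inner_simps inner_commute divide_inverse mult.commute)
      then show "(\<lambda>x. c * poly P (x \<bullet> e)) ((y + t *\<^sub>R b) /\<^sub>R norm (y + t *\<^sub>R b)) =
          c * poly P ((u + t * (e \<bullet> b)) / sqrt (s + 2 * t * (y \<bullet> b) + t\<^sup>2))" by simp
    qed
    show ?thesis unfolding eq d2_1D[OF s] A_def B_def ..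
  qed
  have "laplace_beltrami (\<lambda>x. c * poly P (x \<bullet> e)) y =
     (\<Sum>b\<in>Basis. c * (A * ((e \<bullet> b * s - u * (y \<bullet> b)) / (s * sqrt s))\<^sup>2 +
          B * ((3 * u * (y \<bullet> b)\<^sup>2 - u * s - 2 * (e \<bullet> b) * (y \<bullet> b) * s) / (s\<^sup>2 * sqrt s))))"
    unfolding laplace_beltrami_def laplacian_def by (rule sum.cong[OF refl]) (rule tm)
  also have "\<dots> = c * (A * ((\<Sum>b\<in>Basis. (e \<bullet> b * s - u * (y \<bullet> b))\<^sup>2) / (s * sqrt s)\<^sup>2) +
          B * ((\<Sum>b\<in>Basis. 3 * u * (y \<bullet> b)\<^sup>2 - u * s - 2 * (e \<bullet> b) * (y \<bullet> b) * s) / (s\<^sup>2 * sqrt s)))"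
    by (simp add: sum_distrib_left[symmetric] sum.distrib sum_divide_distrib[symmetric] power_divide)
  also have "(\<Sum>b\<in>Basis. (e \<bullet> b * s - u * (y \<bullet> b))\<^sup>2) = s * s - 2 * s * u * u + u * u * s"
  proof -
    have "(\<Sum>b\<in>Basis. (e \<bullet> b * s - u * (y \<bullet> b))\<^sup>2) =
       (\<Sum>b\<in>Basis. s * s * ((e \<bullet> b) * (e \<bullet> b)) - 2 * s * u * ((e \<bullet> b) * (y \<bullet> b)) + u * u * ((y \<bullet> b) * (y \<bullet> b)))"
      by (rule sum.cong) (auto simp: power2_eq_square algebra_simps)
    also have "\<dots> = s * s * (e \<bullet> e) - 2 * s * u * (e \<bullet> y) + u * u * (y \<bullet> y)"
      by (simp add: sum.distrib sum_subtractf sum_distrib_left[symmetric] basis_sums)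
    finally show ?thesis using e by (simp add: s_def u_def inner_commute norm_eq_1)
  qed
  also have "(\<Sum>b\<in>Basis. 3 * u * (y \<bullet> b)\<^sup>2 - u * s - 2 * (e \<bullet> b) * (y \<bullet> b) * s) = 3 * u * s - u * s * real CARD('n) - 2 * u * s"
  proof -
    have "(\<Sum>b\<in>Basis. 3 * u * (y \<bullet> b)\<^sup>2 - u * s - 2 * (e \<bullet> b) * (y \<bullet> b) * s) =
        (\<Sum>b\<in>Basis. 3 * u * ((y \<bullet> b) * (y \<bullet> b)) - u * s - 2 * s * ((e \<bullet> b) * (y \<bullet> b)))"
      by (rule sum.cong) (auto simp: power2_eq_square algebra_simps)
    also have "\<dots> = 3 * u * (y \<bullet> y) - u * s * real CARD('n) - 2 * s * (e \<bullet> y)"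
      by (simp add: sum.distrib sum_subtractf sum_distrib_left[symmetric] basis_sums)
    finally show ?thesis by (simp add: s_def u_def inner_commute)
  qed
  finally have L: "laplace_beltrami (\<lambda>x. c * poly P (x \<bullet> e)) y =
    c * (A * ((s * s - 2 * s * u * u + u * u * s) / (s * sqrt s)\<^sup>2) + B * ((3 * u * s - u * s * real CARD('n) - 2 * u * s) / (s\<^sup>2 * sqrt s)))" .
  define r where "r = sqrt s"
  have r: "r > 0" using s by (simp add: r_def)
  have sr: "s = r * r" using s by (simp add: r_def)
  show ?thesis
    unfolding L ns[symmetric] u_def[symmetric] s_def[symmetric] A_def B_def r_def[symmetric]
    unfolding sr using r by (simp add: field_simps power2_eq_square)
qed


lemma cont_poly_inner [continuous_intros]:
  "continuous_on UNIV (\<lambda>x::real^'n. poly p (x \<bullet> e))"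
  by (intro continuous_on_compose2[OF continuous_on_poly[OF continuous_on_id]] continuous_intros) auto

lemma integral_poly:
  fixes e :: "real^'n"
  shows "(\<integral>x. poly p (x \<bullet> e) \<partial>sphere_measure) = Lm (mom e) p"
proof -
  have "(\<integral>x. poly p (x \<bullet> e) \<partial>sphere_measure) = (\<integral>x. (\<Sum>k\<le>degree p. coeff p k * (x \<bullet> e) ^ k) \<partial>sphere_measure)"
    by (simp add: poly_altdef)
  also have "\<dots> = (\<Sum>k\<le>degree p. (\<integral>x. coeff p k * (x \<bullet> e) ^ k \<partial>sphere_measure))"
    by (rule Bochner_Integration.integral_sum[where f="\<lambda>k x. coeff p k * (x \<bullet> e) ^ k"])
       (auto intro!: sphere_integrable_cont continuous_intros)
  also have "\<dots> = Lm (mom e) p"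
    by (simp add: Lm_def mom_def)
  finally show ?thesis .
qed

lemma momseq_mom:
  fixes e :: "real^'n"
  assumes e: "norm e = 1" and N: "CARD('n) \<ge> 3" and lam: "lam = (real CARD('n) - 2) / 2"
  shows "momseq (mom e) lam"
proof
  show "lam > 0" using N lam by simp
  show "mom e 1 = 0" by (rule mom_odd) simp
  fix k
  show "mom e (k + 2) * (real k + 2 * lam + 2) = (real k + 1) * mom e k"
  proof (cases "even k")
    case True
    have "real k + 2 * lam + 2 = real k + real CARD('n)" using lam by simp
    then show ?thesis using mom_rec[OF e True] by (simp only: add.assoc)
  next
    case False
    then have "odd (k + 2)" by simp
    then show ?thesis using mom_odd[of k e] mom_odd[of "k + 2" e] False by simp
  qed
qed


lemma ratio1:
  fixes Q A B L M :: real
  assumes "Q \<noteq> 0" "L \<noteq> 0" "B \<noteq> 0" "M \<noteq> 0"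
  shows "(Q * A / (2 * L * B)) / (M * Q / (L * B)) = A / (2 * M)"
  using assms by (simp add: field_simps)

lemma ratio2:
  fixes Q A B L M C D :: real
  assumes "Q \<noteq> 0" "L \<noteq> 0" "B \<noteq> 0" "C \<noteq> 0" "A \<noteq> 0"
  shows "(Q * A * M * D / (2 * L * C)) / (Q * A / (2 * L * B)) = M * D * B / C"
  using assms by (simp add: field_simps)


theorem proposition1:
  fixes e :: "real ^ 'n" and c :: real and m :: nat and lam :: real
  assumes "CARD('n) \<ge> 3"
    and "lam = (real CARD('n) - 2) / 2"
    and "norm e = 1"
    and "c \<noteq> 0"
  defines "Phi \<equiv> (\<lambda>x :: real ^ 'n.
             c * (\<Sum>l\<le>m. (real l + lam) / lam * gegenbauer lam l (x \<bullet> e)))"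
  shows "var_S Phi = ((2 * real m + 2 * lam + 1) / (2 * real m))\<^sup>2 - 1 \<and>
         var_M Phi = real m * (real m + 2 * lam + 1) * (2 * lam + 1) / (2 * lam + 3)"
proof -
  note N = assms(1) and lamdef = assms(2) and e = assms(3) and c = assms(4)
  interpret momseq "mom e" lam by (rule momseq_mom[OF e N lamdef])
  have lam: "lam > 0" using N lamdef by simp
  define K where "K = Kp lam m"
  have PhiK: "Phi x = c * poly K (x \<bullet> e)" for x
    unfolding Phi_def K_def Kp_def by (simp add: poly_sum poly_gp)
  define \<mu>0 where "\<mu>0 = mom e 0"
  have mu0: "\<mu>0 > 0" unfolding \<mu>0_def mom_def using sphere_measure_pos by simp
  define S0 where "S0 = (\<Sum>l\<le>m. (real l + lam) / lam * cc lam l)"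
  define S1 where "S1 = (\<Sum>l\<le>m. (real l + lam) / lam * (real l * (real l + 2 * lam)) * cc lam l)"
  define T where "T = real m * cc lam m * (real m + 2 * lam) / (lam * (2 * lam + 1))"
  have ccp: "cc lam m > 0" using cc_pos[OF lam] .
  have T0: "T \<ge> 0" unfolding T_def using lam ccp by simp
  have S0c: "S0 = cc lam m * (real m + 2 * lam) * (2 * real m + 2 * lam + 1) / (2 * lam * (2 * lam + 1))"
    unfolding S0_def by (rule eq_divide_imp) (use lam S0_closed[OF lam, of m] in auto)
  have S1c: "S1 = cc lam m * (real m + 2 * lam) * (2 * real m + 2 * lam + 1) * real m * (real m + 2 * lam + 1) / (2 * lam * (2 * lam + 3))"
    unfolding S1_def by (rule eq_divide_imp) (use lam S1_closed[OF lam, of m] in auto)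
  have I1: "(\<integral>x. (Phi x)\<^sup>2 \<partial>sphere_measure) = c\<^sup>2 * (\<mu>0 * S0)"
  proof -
    have "(\<integral>x. (Phi x)\<^sup>2 \<partial>sphere_measure) = (\<integral>x. c\<^sup>2 * poly (K * K) (x \<bullet> e) \<partial>sphere_measure)"
      by (simp add: PhiK power2_eq_square mult_ac)
    also have "\<dots> = c\<^sup>2 * Lm (mom e) (K * K)" by (simp only: integral_mult_right_zero integral_poly)
    finally show ?thesis unfolding K_def Lm_KK \<mu>0_def S0_def .
  qed
  have I2: "(\<integral>x. (Phi x)\<^sup>2 *\<^sub>R x \<partial>sphere_measure) = (c\<^sup>2 * (\<mu>0 * T)) *\<^sub>R e"
  proof -
    have "(\<integral>x. (Phi x)\<^sup>2 *\<^sub>R x \<partial>sphere_measure) = (\<integral>x. (c\<^sup>2 * poly (K * K) (x \<bullet> e)) *\<^sub>R x \<partial>sphere_measure)"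
      by (simp add: PhiK power2_eq_square mult_ac)
    also have "\<dots> = (\<integral>x. (c\<^sup>2 * poly (K * K) (x \<bullet> e)) * (x \<bullet> e) \<partial>sphere_measure) *\<^sub>R e"
      by (rule sphere_vec[OF e]) (intro continuous_intros)
    also have "(\<integral>x. (c\<^sup>2 * poly (K * K) (x \<bullet> e)) * (x \<bullet> e) \<partial>sphere_measure) = (\<integral>x. c\<^sup>2 * poly (Xp * K * K) (x \<bullet> e) \<partial>sphere_measure)"
      by (simp add: mult_ac)
    also have "\<dots> = c\<^sup>2 * Lm (mom e) (Xp * K * K)" by (simp only: integral_mult_right_zero integral_poly)
    finally show ?thesis unfolding K_def Lm_XKK \<mu>0_def T_def .
  qed
  have VS: "var_S Phi = ((2 * real m + 2 * lam + 1) / (2 * real m))\<^sup>2 - 1"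
  proof -
    have "var_S Phi = ((c\<^sup>2 * (\<mu>0 * S0)) / (c\<^sup>2 * (\<mu>0 * T)))\<^sup>2 - 1"
      unfolding var_S_def I1 I2 using e T0 mu0 by simp
    also have "(c\<^sup>2 * (\<mu>0 * S0)) / (c\<^sup>2 * (\<mu>0 * T)) = S0 / T"
      using c mu0 by simp
    also have "S0 / T = (2 * real m + 2 * lam + 1) / (2 * real m)"
    proof (cases "m = 0")
      case True
      then show ?thesis by (simp add: T_def)
    next
      case False
      have "S0 / T = (cc lam m * (real m + 2 * lam)) * (2 * real m + 2 * lam + 1) / (2 * lam * (2 * lam + 1)) /
             (real m * (cc lam m * (real m + 2 * lam)) / (lam * (2 * lam + 1)))"
        unfolding S0c T_def by (simp add: mult.assoc)
      also have "\<dots> = (2 * real m + 2 * lam + 1) / (2 * real m)"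
        by (rule ratio1) (use lam ccp False in auto)
      finally show ?thesis .
    qed
    finally show ?thesis .
  qed
  have PhiE: "Phi = (\<lambda>x. c * poly K (x \<bullet> e))" using PhiK by auto
  have LBx: "laplace_beltrami Phi x * Phi x = c\<^sup>2 * poly (Dop lam K * K) (x \<bullet> e)" if x: "norm x = 1" for x
  proof -
    have x0: "x \<noteq> 0" using x by auto
    have xx: "x \<bullet> x = 1" using x by (simp add: norm_eq_1)
    have N1: "real CARD('n) - 1 = 2 * lam + 1" using lamdef by simp
    show ?thesis unfolding PhiE LB_formula[OF e x0] using x xx N1
      by (simp add: Dop_def power2_eq_square algebra_simps)
  qed
  have mpoly [measurable]: "poly p \<in> borel_measurable borel" for p :: "real poly"
    by (intro borel_measurable_continuous_onI continuous_on_poly continuous_on_id)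
  have LBm: "laplace_beltrami Phi \<in> borel_measurable borel"
  proof -
    define F where "F y = c * (poly (pderiv (pderiv K)) ((y \<bullet> e) / norm y) * (1 - ((y \<bullet> e) / norm y)\<^sup>2)
          - (real CARD('n) - 1) * ((y \<bullet> e) / norm y) * poly (pderiv K) ((y \<bullet> e) / norm y)) / (y \<bullet> y)" for y :: "real^'n"
    have "laplace_beltrami Phi = (\<lambda>y. if y = 0 then laplace_beltrami Phi 0 else F y)"
      unfolding F_def PhiE by (auto simp: LB_formula[OF e])
    moreover have "(\<lambda>y. if y = 0 then laplace_beltrami Phi 0 else F y) \<in> borel_measurable borel"
      unfolding F_def by measurable
    ultimately show ?thesis by simp
  qed
  have I3: "(\<integral>x. laplace_beltrami Phi x * Phi x \<partial>sphere_measure) = c\<^sup>2 * (- \<mu>0 * S1)"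
  proof -
    have Pm: "Phi \<in> borel_measurable borel" unfolding PhiE by measurable
    have "(\<integral>x. laplace_beltrami Phi x * Phi x \<partial>sphere_measure) = (\<integral>x. c\<^sup>2 * poly (Dop lam K * K) (x \<bullet> e) \<partial>sphere_measure)"
    proof (rule integral_cong_AE)
      show "(\<lambda>x. laplace_beltrami Phi x * Phi x) \<in> borel_measurable sphere_measure"
        using LBm Pm by (simp add: measurable_cong_sets[OF sets_sphere_measure refl])
      show "(\<lambda>x. c\<^sup>2 * poly (Dop lam K * K) (x \<bullet> e)) \<in> borel_measurable sphere_measure"
        by (intro sphere_meas_cont continuous_intros)
      show "AE x in sphere_measure. laplace_beltrami Phi x * Phi x = c\<^sup>2 * poly (Dop lam K * K) (x \<bullet> e)"
        using sphere_AE_norm by eventually_elim (rule LBx)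
    qed
    also have "\<dots> = c\<^sup>2 * Lm (mom e) (Dop lam K * K)" by (simp only: integral_mult_right_zero integral_poly)
    finally show ?thesis unfolding K_def Lm_DKK \<mu>0_def S1_def .
  qed
  have VM: "var_M Phi = real m * (real m + 2 * lam + 1) * (2 * lam + 1) / (2 * lam + 3)"
  proof -
    have "var_M Phi = S1 / S0"
      unfolding var_M_def I1 I3 using c mu0 by simp
    also have "\<dots> = (cc lam m * (real m + 2 * lam)) * (2 * real m + 2 * lam + 1) * real m * (real m + 2 * lam + 1) / (2 * lam * (2 * lam + 3)) /
        ((cc lam m * (real m + 2 * lam)) * (2 * real m + 2 * lam + 1) / (2 * lam * (2 * lam + 1)))"
      unfolding S0c S1c by (simp add: mult.assoc)
    also have "\<dots> = real m * (real m + 2 * lam + 1) * (2 * lam + 1) / (2 * lam + 3)"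
      by (rule ratio2) (use lam ccp in auto)
    finally show ?thesis .
  qed
  show ?thesis using VS VM by simp
qed


end
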